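(* Let $T>0$ and let $\{\Psi_n\}_{n\ge0}$ be the Legendre polynomial-exponential basis of $L^2_{e^{-2t}}(0,T)$. For every $k\in\mathbb{N}$ there exists a constant $C>0$, depending only on $k$ and $T$, such that $$\sum_{n=0}^\infty n^{2k}\left|\langle u,\Psi_n\rangle_{L^2_{e^{-2t}}(0,T)}\right|^2\le C\,\|u\|_{H^k(0,T)}^2\quad\text{for all } u\in H^k(0,T).$$
   Context: $P_n(x)=\frac{1}{2^n n!}\frac{d^n}{dx^n}(x^2-1)^n$ is the Legendre polynomial of degree $n$; $Q_n(t)=\sqrt{\tfrac{2n+1}{T}}P_n(\tfrac{2t}{T}-1)$, so $\{Q_n\}_{n\ge0}$ is an orthonormal basis of $L^2(0,T)$; $\Psi_n(t)=e^tQ_n(t)$. $L^2_{e^{-2t}}(0,T)$ is the space of functions $u$ with $\int_0^Te^{-2t}|u|^2dt<\infty$, with inner product $\langle u,v\rangle_{L^2_{e^{-2t}}(0,T)}=\int_0^Te^{-2t}u(t)v(t)\,dt$; $\{\Psi_n\}$ is an orthonormal basis of it. *)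

theory Defs
  imports "HOL-Analysis.Analysis"
begin

definition legendreP :: "nat \<Rightarrow> real \<Rightarrow> real" where
  "legendreP n x = (1 / (2 ^ n * fact n)) * (deriv ^^ n) (\<lambda>y. (y\<^sup>2 - 1) ^ n) x"

definition legendreQ :: "real \<Rightarrow> nat \<Rightarrow> real \<Rightarrow> real" where
  "legendreQ T n t = sqrt ((2 * real n + 1) / T) * legendreP n (2 * t / T - 1)"

definition legendrePsi :: "real \<Rightarrow> nat \<Rightarrow> real \<Rightarrow> real" where
  "legendrePsi T n t = exp t * legendreQ T n t"

definition weighted_inner :: "real \<Rightarrow> (real \<Rightarrow> real) \<Rightarrow> (real \<Rightarrow> real) \<Rightarrow> real" where
  "weighted_inner T u v = (LINT t:{0..T}|lborel. exp (-2 * t) * u t * v t)"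

definition test_fun :: "real \<Rightarrow> (real \<Rightarrow> real) \<Rightarrow> bool" where
  "test_fun T \<phi> \<longleftrightarrow> (\<forall>j x. ((deriv ^^ j) \<phi>) differentiable (at x))
      \<and> (\<exists>a b. 0 < a \<and> a \<le> b \<and> b < T \<and> (\<forall>x. x \<notin> {a..b} \<longrightarrow> \<phi> x = 0))"

definition L2_on :: "real \<Rightarrow> (real \<Rightarrow> real) \<Rightarrow> bool" where
  "L2_on T f \<longleftrightarrow> set_borel_measurable lborel {0..T} f
      \<and> set_integrable lborel {0..T} (\<lambda>t. (f t)\<^sup>2)"

text \<open>sobolev_data T k v: v 0 = u is in H^k(0,T), and v j is (a representative of)
  its j-th weak derivative, for j = 0..k.\<close>
definition sobolev_data :: "real \<Rightarrow> nat \<Rightarrow> (nat \<Rightarrow> real \<Rightarrow> real) \<Rightarrow> bool" where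
  "sobolev_data T k v \<longleftrightarrow> (\<forall>j\<le>k. L2_on T (v j))
     \<and> (\<forall>j\<le>k. \<forall>\<phi>. test_fun T \<phi> \<longrightarrow>
          (LINT t:{0..T}|lborel. v 0 t * (deriv ^^ j) \<phi> t)
            = (-1) ^ j * (LINT t:{0..T}|lborel. v j t * \<phi> t))"

definition Hk_norm_sq :: "real \<Rightarrow> nat \<Rightarrow> (nat \<Rightarrow> real \<Rightarrow> real) \<Rightarrow> real" where
  "Hk_norm_sq T k v = (\<Sum>j\<le>k. (LINT t:{0..T}|lborel. (v j t)\<^sup>2))"

end

theory Submission
  imports Defs "HOL-Computational_Algebra.Polynomial" "HOL-Real_Asymp.Real_Asymp"
begin

definition rho :: "real \<Rightarrow> real poly" where "rho T = [:0, T, -1:]"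

lemma poly_rho: "poly (rho T) t = t * (T - t)"
  by (simp add: rho_def algebra_simps)

definition PI :: "real \<Rightarrow> real poly \<Rightarrow> real" where
  "PI T p = (LINT t:{0..T}|lborel. poly p t)"

lemma poly_cont: "continuous_on S (\<lambda>t. poly (p::real poly) t)"
  using continuous_on_poly[of S "\<lambda>x. x" p] by (simp add: continuous_on_id)

lemma poly_set_integrable: "set_integrable lborel {a..b::real} (\<lambda>t. poly (p::real poly) t)"
  by (intro borel_integrable_atLeastAtMost' poly_cont)

lemma PI_add: "PI T (p + q) = PI T p + PI T q"
  unfolding PI_def poly_add by (rule set_integral_add(2)[OF poly_set_integrable poly_set_integrable])

lemma PI_diff: "PI T (p - q) = PI T p - PI T q"
  unfolding PI_def poly_diff by (rule set_integral_diff(2)[OF poly_set_integrable poly_set_integrable])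

lemma PI_smult: "PI T (smult c p) = c * PI T p"
  unfolding PI_def poly_smult by (rule set_integral_mult_right)

lemma PI_minus: "PI T (- p) = - PI T p"
  using PI_smult[of T "-1" p] by simp

lemma PI_pderiv:
  assumes "0 \<le> T"
  shows "PI T (pderiv p) = poly p T - poly p 0"
proof -
  have "integral\<^sup>L lborel (\<lambda>x. indicator {0..T} x *\<^sub>R poly (pderiv p) x) = poly p T - poly p 0"
    by (rule integral_FTC_atLeastAtMost[OF assms])
       (auto intro!: poly_cont simp: has_real_derivative_iff_has_vector_derivative[symmetric]
             intro: has_field_derivative_at_within poly_DERIV)
  then show ?thesis unfolding PI_def set_lebesgue_integral_def by simp
qed

lemma IBP:
  assumes "0 \<le> T"
  shows "PI T (pderiv a * b) = poly a T * poly b T - poly a 0 * poly b 0 - PI T (a * pderiv b)"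
proof -
  have "PI T (pderiv (a * b)) = poly (a*b) T - poly (a*b) 0" by (rule PI_pderiv[OF assms])
  moreover have "pderiv (a * b) = a * pderiv b + pderiv a * b" by (simp add: pderiv_mult mult.commute)
  ultimately show ?thesis by (simp add: PI_add)
qed

lemma IBP_iter:
  assumes "0 \<le> T" "\<And>j. j < m \<Longrightarrow> poly ((pderiv^^j) a) 0 = 0 \<and> poly ((pderiv^^j) a) T = 0"
  shows "PI T ((pderiv^^m) a * b) = (-1)^m * PI T (a * (pderiv^^m) b)"
  using assms(2)
proof (induction m arbitrary: b)
  case 0
  then show ?case by simp
next
  case (Suc m)
  have "PI T ((pderiv^^Suc m) a * b) = PI T (pderiv ((pderiv^^m) a) * b)" by simp
  also have "\<dots> = - PI T ((pderiv^^m) a * pderiv b)"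
    using IBP[OF assms(1)] Suc.prems[of m] by simp
  also have "\<dots> = - ((-1)^m * PI T (a * (pderiv^^m) (pderiv b)))"
    using Suc.IH[of "pderiv b"] Suc.prems by simp
  also have "(pderiv^^m) (pderiv b) = (pderiv^^Suc m) b"
    by (simp only: funpow_Suc_right o_def)
  finally show ?case by simp
qed

lemma vanish_form:
  assumes "j \<le> i"
  shows "\<exists>q. (pderiv^^j) (r ^ i * p) = r ^ (i - j) * (q :: real poly)"
  using assms
proof (induction j)
  case 0
  then show ?case by auto
next
  case (Suc j)
  then obtain q where q: "(pderiv^^j) (r ^ i * p) = r ^ (i - j) * q" by auto
  obtain s where s: "i - j = Suc s" "i - Suc j = s" using Suc.prems by (metis Suc_diff_Suc Suc_le_lessD)
  have "(pderiv^^Suc j) (r ^ i * p) = pderiv (r ^ Suc s * q)" using q s by simp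
  also have "\<dots> = r ^ s * (r * pderiv q + smult (of_nat (Suc s)) (q * pderiv r))"
    by (simp add: pderiv_mult pderiv_power_Suc algebra_simps del: power_Suc) (simp add: power_Suc)
  finally show ?case using s by auto
qed

lemma vanish_at:
  assumes "j < i"
  shows "poly ((pderiv^^j) (rho T ^ i * p)) 0 = 0 \<and> poly ((pderiv^^j) (rho T ^ i * p)) T = 0"
proof -
  obtain q where q: "(pderiv^^j) (rho T ^ i * p) = rho T ^ (i - j) * q"
    using vanish_form[of j i "rho T" p] assms by auto
  have "i - j > 0" using assms by simp
  then show ?thesis unfolding q by (simp add: poly_rho)
qed

lemma higher_pderiv_zero:
  fixes p :: "real poly"
  assumes "degree p < n"
  shows "(pderiv^^n) p = 0"
proof -
  obtain m where m: "n = Suc m" using assms by (cases n) auto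
  have "degree ((pderiv^^m) p) = 0" using assms m by (simp add: degree_higher_pderiv)
  then show ?thesis using m by (simp add: pderiv_eq_0_iff)
qed

lemma higher_pderiv_top:
  fixes p :: "real poly"
  shows "(pderiv^^(degree p)) p = [:fact (degree p) * lead_coeff p:]"
proof -
  have "degree ((pderiv^^(degree p)) p) = 0" by (simp add: degree_higher_pderiv)
  then have "(pderiv^^(degree p)) p = [:coeff ((pderiv^^(degree p)) p) 0:]"
    by (simp add: degree_0_id)
  also have "coeff ((pderiv^^(degree p)) p) 0 = fact (degree p) * lead_coeff p"
    by (simp add: coeff_higher_pderiv pochhammer_fact)
  finally show ?thesis .
qed

lemma rho_factor: "rho T = [:0,1:] * [:T,-1:]"
  by (simp add: rho_def)

lemma degree_rho: "degree (rho T) = 2"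
  by (simp add: rho_def)

lemma lead_coeff_rho: "lead_coeff (rho T) = -1"
  by (simp add: rho_def)

lemma rho_nz: "rho T \<noteq> 0" by (simp add: rho_def)

lemma pd_x: "pderiv [:0,1::real:] = 1" by (simp add: pderiv_pCons)
lemma pd_Tx: "pderiv [:T,-1::real:] = [:-1:]" by (simp add: pderiv_pCons)

lemma beta:
  assumes "0 \<le> T"
  shows "PI T ([:0,1:]^a * [:T,-1:]^b) = fact a * fact b / fact (a+b+1) * T^(a+b+1)"
proof (induction b arbitrary: a)
  case 0
  have d: "pderiv (smult (1 / (real a + 1)) ([:0,1:]^(Suc a))) = [:0,1:]^a"
    by (simp add: pderiv_smult pderiv_power_Suc pd_x pd_Tx add.commute del: power_Suc)
  have "PI T ([:0,1:]^a) = T^(Suc a) / (real a + 1)"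
    using PI_pderiv[OF assms, of "smult (1 / (real a + 1)) ([:0,1:]^(Suc a))"] d by simp
  moreover have "fact a / fact (a + 1) = 1 / (real a + 1)" by (simp add: divide_simps)
  ultimately show ?case by simp
next
  case (Suc b)
  let ?A = "smult (1 / (real a + 1)) ([:0,1:]^(Suc a))"
  let ?B = "[:T,-1:]^(Suc b) :: real poly"
  have d: "pderiv ?A = [:0,1:]^a"
    by (simp add: pderiv_smult pderiv_power_Suc pd_x pd_Tx add.commute del: power_Suc)
  have dB: "pderiv ?B = smult (- real (Suc b)) ([:T,-1:]^b)"
    by (simp add: pderiv_smult pderiv_power_Suc pd_x pd_Tx del: power_Suc)
  have "PI T ([:0,1:]^a * ?B) = poly ?A T * poly ?B T - poly ?A 0 * poly ?B 0 - PI T (?A * pderiv ?B)"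
    using IBP[OF assms, of ?A ?B] d by simp
  also have "\<dots> = - PI T (?A * pderiv ?B)" by simp
  also have "?A * pderiv ?B = smult (- real (Suc b) / (real a + 1)) ([:0,1:]^(Suc a) * [:T,-1:]^b)"
    unfolding dB by (simp add: algebra_simps del: power_Suc)
  also have "- PI T \<dots> = real (Suc b) / (real a + 1) * PI T ([:0,1:]^(Suc a) * [:T,-1:]^b)"
    by (simp only: PI_smult minus_divide_left mult_minus_left minus_minus)
  also have "\<dots> = real (Suc b) / (real a + 1) * (fact (Suc a) * fact b / fact (Suc a + b + 1) * T^(Suc a + b + 1))"
    by (simp only: Suc.IH)
  also have "\<dots> = fact a * fact (Suc b) / fact (a + Suc b + 1) * T ^ (a + Suc b + 1)"
  proof -
    have e1: "Suc a + b + 1 = a + Suc b + 1" by simp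
    have f1: "fact (Suc a) = real (Suc a) * (fact a :: real)" "fact (Suc b) = real (Suc b) * (fact b :: real)"
      by (rule fact_Suc)+
    have f2: "real (Suc a) = real a + 1" by simp
    have g: "\<And>x y fa fb F P :: real. x \<noteq> 0 \<Longrightarrow> y / x * ((x * fa) * fb / F * P) = fa * (y * fb) / F * P"
      by (simp add: field_simps)
    show ?thesis unfolding e1 f1 f2 by (rule g) simp
  qed
  finally show ?case .
qed

definition Rn :: "real \<Rightarrow> nat \<Rightarrow> real poly" where
  "Rn T n = (pderiv^^n) (rho T ^ n)"

lemma degree_rho_pow: "degree (rho T ^ n) = 2 * n"
  by (simp add: degree_power_eq rho_nz degree_rho)

lemma degree_Rn: "degree (Rn T n) = n"
  by (simp add: Rn_def degree_higher_pderiv degree_rho_pow)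

lemma rho_pow_vanish: "j < n \<Longrightarrow> poly ((pderiv^^j) (rho T ^ n)) 0 = 0 \<and> poly ((pderiv^^j) (rho T ^ n)) T = 0"
  using vanish_at[of j n T 1] by simp

lemma Rn_orth_lt:
  assumes "0 \<le> T" "m < n"
  shows "PI T (Rn T n * Rn T m) = 0"
proof -
  have "PI T (Rn T n * Rn T m) = (-1)^n * PI T (rho T ^ n * (pderiv^^n) (Rn T m))"
    unfolding Rn_def[of T n] by (rule IBP_iter[OF assms(1) rho_pow_vanish])
  also have "(pderiv^^n) (Rn T m) = 0"
    by (rule higher_pderiv_zero) (simp add: degree_Rn assms)
  finally show ?thesis by (simp add: PI_def)
qed

lemma Rn_orth:
  assumes "0 \<le> T" "m \<noteq> n"
  shows "PI T (Rn T n * Rn T m) = 0"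
proof (cases "m < n")
  case True then show ?thesis using Rn_orth_lt[OF assms(1)] by blast
next
  case False
  then have "n < m" using assms by simp
  then show ?thesis using Rn_orth_lt[OF assms(1), of n m] by (simp add: mult.commute)
qed

lemma Rn_norm:
  assumes "0 \<le> T"
  shows "PI T (Rn T n * Rn T n) = (fact n)^2 * T^(2*n+1) / (2 * real n + 1)"
proof -
  have "PI T (Rn T n * Rn T n) = (-1)^n * PI T (rho T ^ n * (pderiv^^n) (Rn T n))"
    unfolding Rn_def[of T n] by (rule IBP_iter[OF assms(1) rho_pow_vanish])
  also have "(pderiv^^n) (Rn T n) = (pderiv^^(degree (rho T ^ n))) (rho T ^ n)"
    unfolding Rn_def degree_rho_pow mult_2 funpow_add o_def ..
  also have "\<dots> = [:fact (2*n) * (-1)^n:]"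
    using higher_pderiv_top[of "rho T ^ n"] lead_coeff_power[of "rho T" n]
    by (simp add: degree_rho_pow lead_coeff_rho)
  also have "rho T ^ n * [:fact (2*n) * (-1)^n:] = smult (fact (2*n) * (-1)^n) ([:0,1:]^n * [:T,-1:]^n)"
  proof -
    have e: "rho T ^ n = [:0,1:]^n * [:T,-1:]^n" by (simp only: rho_factor power_mult_distrib)
    show ?thesis unfolding e by (simp only: mult_pCons_right smult_0_right mult_zero_right pCons_0_0 add_0_right)
  qed
  also have "PI T \<dots> = fact (2*n) * (-1)^n * (fact n * fact n / fact (n+n+1) * T^(n+n+1))"
    by (simp only: PI_smult beta[OF assms])
  also have "(-1)^n * \<dots> = fact (2*n) * (fact n * fact n / fact (2*n+1) * T^(2*n+1))"
  proof -
    have h1: "((-1::real)^n) * (-1)^n = 1" by (simp add: power_mult_distrib[symmetric])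
    have e: "n + n + 1 = 2*n+1" by simp
    have sq1: "\<And>s F X :: real. s * s = 1 \<Longrightarrow> s * (F * s * X) = F * X"
    proof -
      fix s F X :: real assume h: "s * s = 1"
      have "s * (F * s * X) = (s * s) * F * X" by (simp add: algebra_simps)
      then show "s * (F * s * X) = F * X" by (simp add: h)
    qed
    show ?thesis unfolding e by (rule sq1[OF h1])
  qed
  also have "\<dots> = (fact n)^2 * T^(2*n+1) / (2 * real n + 1)"
  proof -
    have fe: "fact (2*n+1) = (2 * real n + 1) * (fact (2*n) :: real)"
      by (simp add: fact_Suc)
    have f0: "fact (2*n) \<noteq> (0::real)" by simp
    have s0: "2 * real n + 1 \<noteq> 0" by (simp add: add_nonneg_eq_0_iff)
    have H: "\<And>F F2 s A P :: real. F \<noteq> 0 \<Longrightarrow> s \<noteq> 0 \<Longrightarrow> F2 = s * F \<Longrightarrow> F * (A / F2 * P) = A * P / s"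
      by (simp add: field_simps)
    show ?thesis using H[OF f0 s0 fe, of "fact n * fact n" "T^(2*n+1)"] by (simp only: power2_eq_square)
  qed
  finally show ?thesis .
qed

lemma pd_rho: "pderiv (rho T) = [:T, -2:]" by (simp add: rho_def pderiv_pCons)
lemma pd_lin: "pderiv [:T, -2::real:] = [:-2:]" by (simp add: pderiv_pCons)
lemma poly_lin: "poly [:T, -2::real:] x = T - 2 * x" by simp

lemma poly_zeroI: "(\<And>x. poly p x = (0::real)) \<Longrightarrow> p = 0"
  using poly_eq_poly_eq_iff[of p 0] by auto

lemma ODE0: "rho T * pderiv (rho T ^ n) - smult (real n) ([:T,-2:] * rho T ^ n) = 0"
proof (cases n)
  case 0 then show ?thesis by simp
next
  case (Suc m)
  show ?thesis unfolding Suc pderiv_power_Suc pd_rho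
    by (rule poly_zeroI) (simp add: algebra_simps)
qed

lemma V_step:
  fixes g0 :: "real poly"
  assumes "rho T * pderiv (pderiv g0) + smult a ([:T,-2:] * pderiv g0) + smult b g0 = 0"
  shows "rho T * pderiv (pderiv (pderiv g0)) + smult (a+1) ([:T,-2:] * pderiv (pderiv g0))
           + smult (b - 2*a) (pderiv g0) = 0"
proof -
  let ?P = "rho T * pderiv (pderiv g0) + smult a ([:T,-2:] * pderiv g0) + smult b g0"
  have "pderiv ?P = 0" using assms by simp
  then have "poly (pderiv ?P) x = 0" for x by simp
  moreover have "poly (pderiv ?P) x = poly (rho T * pderiv (pderiv (pderiv g0)) + smult (a+1) ([:T,-2:] * pderiv (pderiv g0))
           + smult (b - 2*a) (pderiv g0)) x" for x
    by (simp only: pderiv_add pderiv_mult pderiv_smult pd_rho pd_lin poly_add poly_mult poly_smult poly_lin)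
       (simp add: algebra_simps)
  ultimately show ?thesis by (intro poly_zeroI) metis
qed

lemma V:
  "rho T * pderiv (pderiv ((pderiv^^j) (rho T^n))) + smult (real j + 1 - real n) ([:T,-2:] * pderiv ((pderiv^^j) (rho T^n)))
     + smult ((real j + 1) * (2*real n - real j)) ((pderiv^^j) (rho T^n)) = 0"
proof (induction j)
  case 0
  let ?P = "rho T * pderiv (rho T ^ n) - smult (real n) ([:T,-2:] * rho T ^ n)"
  have "pderiv ?P = 0" using ODE0[of T n] by simp
  then have "poly (pderiv ?P) x = 0" for x by simp
  moreover have "poly (pderiv ?P) x = poly (rho T * pderiv (pderiv (rho T^n)) + smult (0 + 1 - real n) ([:T,-2:] * pderiv (rho T^n))
     + smult ((0 + 1) * (2*real n - 0)) (rho T^n)) x" for x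
    by (simp only: pderiv_add pderiv_diff pderiv_mult pderiv_smult pd_rho pd_lin poly_add poly_diff poly_mult poly_smult poly_lin)
       (simp add: algebra_simps)
  ultimately show ?case by (intro poly_zeroI) (metis funpow_0 of_nat_0)
next
  case (Suc j)
  have h: "rho T * pderiv (pderiv (pderiv ((pderiv^^j) (rho T^n)))) + smult ((real j + 1 - real n) + 1) ([:T,-2:] * pderiv (pderiv ((pderiv^^j) (rho T^n))))
           + smult ((real j + 1) * (2*real n - real j) - 2*(real j + 1 - real n)) (pderiv ((pderiv^^j) (rho T^n))) = 0"
    by (rule V_step[OF Suc.IH])
  have c1: "real j + 1 - real n + 1 = real (Suc j) + 1 - real n" by simp
  have c2: "(real j + 1) * (2 * real n - real j) - 2 * (real j + 1 - real n) = (real (Suc j) + 1) * (2 * real n - real (Suc j))"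
    by (simp add: algebra_simps)
  show ?case using h unfolding c1 c2 by (simp only: funpow.simps o_apply)
qed

lemma W:
  "rho T * pderiv (pderiv ((pderiv^^j) (Rn T n))) + smult (real j + 1) ([:T,-2:] * pderiv ((pderiv^^j) (Rn T n)))
     + smult ((real n + real j + 1) * (real n - real j)) ((pderiv^^j) (Rn T n)) = 0"
proof -
  have e: "(pderiv^^j) (Rn T n) = (pderiv^^(j + n)) (rho T ^ n)"
    by (simp add: Rn_def funpow_add)
  have c1: "real (j+n) + 1 - real n = real j + 1" by simp
  have c2: "(real (j+n) + 1) * (2*real n - real (j+n)) = (real n + real j + 1) * (real n - real j)"
    by (simp add: algebra_simps)
  show ?thesis using V[of T "j+n" n] unfolding e c1 c2 .
qed

lemma aux_W:
  fixes R A B C L c :: real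
  assumes "R*A + (real j + 1)*(L*B) + c*C = 0"
  shows "R^Suc j * A + B*(real (Suc j) * R^j * L) = -c*(R^j*C)"
proof -
  have "R^Suc j * A + B*(real (Suc j)*R^j*L) = R^j*(R*A + (real j + 1)*(L*B))" by (simp add: algebra_simps)
  also have "R*A + (real j + 1)*(L*B) = -c*C" using assms by linarith
  finally show ?thesis by simp
qed

lemma W_step:
  "pderiv (rho T ^ Suc j * pderiv ((pderiv^^j) (Rn T n)))
     = smult (- ((real n + real j + 1) * (real n - real j))) (rho T ^ j * (pderiv^^j) (Rn T n))"
proof (rule poly_zeroI[of "_ - _", THEN iffD1[OF right_minus_eq]])
  fix x
  let ?h = "(pderiv^^j) (Rn T n)"
  let ?c = "(real n + real j + 1) * (real n - real j)"
  have Wx: "poly (rho T) x * poly (pderiv (pderiv ?h)) x + (real j + 1) * ((T - 2*x) * poly (pderiv ?h) x)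
      + ?c * poly ?h x = 0"
    using arg_cong[OF W[of T j n], of "\<lambda>p. poly p x"]
    by (simp only: poly_add poly_mult poly_smult poly_lin poly_0)
  have "poly (pderiv (rho T ^ Suc j * pderiv ?h)) x =
     poly (rho T) x ^ Suc j * poly (pderiv (pderiv ?h)) x + poly (pderiv ?h) x * (real (Suc j) * poly (rho T) x ^ j * (T - 2*x))"
    by (simp only: pderiv_mult pderiv_power_Suc pd_rho poly_add poly_mult poly_smult poly_power poly_lin)
  also have "\<dots> = - ?c * (poly (rho T) x ^ j * poly ?h x)"
    by (rule aux_W[OF Wx])
  finally show "poly (pderiv (rho T ^ Suc j * pderiv ?h) - smult (- ?c) (rho T ^ j * ?h)) x = 0"
    by (simp only: poly_diff poly_smult poly_mult poly_power)
qed

definition Lam :: "nat \<Rightarrow> nat \<Rightarrow> real" where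
  "Lam n k = (\<Prod>j<k. (real n + real j + 1) * (real n - real j))"

lemma gegen:
  "(pderiv^^k) (rho T ^ k * (pderiv^^k) (Rn T n)) = smult ((-1)^k * Lam n k) (Rn T n)"
proof (induction k)
  case 0
  then show ?case by (simp add: Lam_def)
next
  case (Suc k)
  have "(pderiv^^Suc k) (rho T ^ Suc k * (pderiv^^Suc k) (Rn T n))
      = (pderiv^^k) (pderiv (rho T ^ Suc k * pderiv ((pderiv^^k) (Rn T n))))"
  proof -
    have e1: "(pderiv^^Suc k) X = (pderiv^^k)(pderiv X)" for X :: "real poly"
      by (simp only: funpow_Suc_right o_def)
    have e2: "(pderiv^^Suc k) (Rn T n) = pderiv ((pderiv^^k) (Rn T n))" by simp
    show ?thesis unfolding e2 by (rule e1)
  qed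
  also have "\<dots> = smult (- ((real n + real k + 1) * (real n - real k))) ((pderiv^^k) (rho T ^ k * (pderiv^^k) (Rn T n)))"
    by (simp only: W_step higher_pderiv_smult)
  also have "\<dots> = smult (- ((real n + real k + 1) * (real n - real k)) * ((-1)^k * Lam n k)) (Rn T n)"
    by (simp only: Suc.IH smult_smult)
  also have "- ((real n + real k + 1) * (real n - real k)) * ((-1)^k * Lam n k) = (-1)^Suc k * Lam n (Suc k)"
    by (simp add: Lam_def)
  finally show ?case .
qed

lemma weighted_orth:
  assumes "0 \<le> T"
  shows "PI T (rho T ^ k * (pderiv^^k) (Rn T n) * (pderiv^^k) (Rn T m)) = Lam n k * PI T (Rn T n * Rn T m)"
proof -
  have "PI T ((pderiv^^k) (rho T ^ k * (pderiv^^k) (Rn T n)) * Rn T m)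
      = (-1)^k * PI T (rho T ^ k * (pderiv^^k) (Rn T n) * (pderiv^^k) (Rn T m))"
    by (rule IBP_iter[OF assms vanish_at])
  moreover have "PI T ((pderiv^^k) (rho T ^ k * (pderiv^^k) (Rn T n)) * Rn T m)
      = (-1)^k * (Lam n k * PI T (Rn T n * Rn T m))"
    by (simp only: gegen mult_smult_left PI_smult mult.assoc)
  ultimately show ?thesis by simp
qed

lemma deriv_poly_fun: "deriv (\<lambda>y. poly q y) = (\<lambda>y. poly (pderiv q) (y::real))"
  by (rule ext, rule DERIV_imp_deriv, rule poly_DERIV)

lemma higher_deriv_poly: "(deriv^^n) (\<lambda>y. poly p y) = (\<lambda>y. poly ((pderiv^^n) p) (y::real))"
proof (induction n)
  case 0 then show ?case by simp
next
  case (Suc n)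
  show ?case by (simp only: funpow.simps o_apply Suc.IH deriv_poly_fun)
qed

lemma pcompose_pow: "pcompose (p ^ n) q = (pcompose p q) ^ n"
  by (induction n) (simp_all add: pcompose_mult pcompose_1)

lemma higher_pderiv_pcompose_lin:
  "(pderiv^^n) (pcompose p [:b, a:]) = smult (a^n) (pcompose ((pderiv^^n) p) [:b, a::real:])"
proof (induction n)
  case 0 then show ?case by simp
next
  case (Suc n)
  have "(pderiv^^Suc n) (pcompose p [:b, a:]) = pderiv (smult (a^n) (pcompose ((pderiv^^n) p) [:b, a:]))"
    by (simp only: funpow.simps o_apply Suc.IH)
  also have "\<dots> = smult (a^n) (pcompose (pderiv ((pderiv^^n) p)) [:b, a:] * [:a:])"
    by (simp only: pderiv_smult pderiv_pcompose) (simp add: pderiv_pCons)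
  also have "\<dots> = smult (a^Suc n) (pcompose ((pderiv^^Suc n) p) [:b, a:])"
    by (simp add: mult.commute)
  finally show ?case .
qed

definition alpha :: "real \<Rightarrow> nat \<Rightarrow> real" where
  "alpha T n = sqrt ((2 * real n + 1) / T) * (-1)^n / (T^n * fact n)"

lemma legendreQ_poly:
  assumes "T > 0"
  shows "legendreQ T n t = alpha T n * poly (Rn T n) t"
proof -
  let ?L = "[:-1, 2/T:] :: real poly"
  let ?P0 = "[:-1, 0, 1:] :: real poly"
  have f: "(\<lambda>y::real. (y\<^sup>2 - 1) ^ n) = (\<lambda>y. poly (?P0 ^ n) y)"
    by (rule ext) (simp add: poly_power power2_eq_square)
  have lp: "legendreP n x = (1 / (2 ^ n * fact n)) * poly ((pderiv^^n) (?P0 ^ n)) x" for x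
    unfolding legendreP_def f higher_deriv_poly ..
  have c: "pcompose ?P0 ?L = smult (-4/T^2) (rho T)"
    by (rule poly_zeroI[of "_ - _", THEN iffD1[OF right_minus_eq]])
       (use assms in \<open>simp add: poly_pcompose rho_def field_simps power2_eq_square\<close>)
  have "smult ((2/T)^n) (pcompose ((pderiv^^n) (?P0 ^ n)) ?L) = (pderiv^^n) (pcompose (?P0 ^ n) ?L)"
    by (rule higher_pderiv_pcompose_lin[symmetric])
  also have "\<dots> = smult ((-4/T^2)^n) (Rn T n)"
    by (simp only: pcompose_pow c smult_power higher_pderiv_smult Rn_def)
  finally have "(2/T)^n * poly ((pderiv^^n) (?P0 ^ n)) (poly ?L t) = (-4/T^2)^n * poly (Rn T n) t"
    by (metis poly_pcompose poly_smult)
  moreover have "poly ?L t = 2 * t / T - 1" by simp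
  ultimately have E1: "poly ((pderiv^^n) (?P0 ^ n)) (2 * t / T - 1) = (T/2)^n * (-4/T^2)^n * poly (Rn T n) t"
    using assms by (simp add: field_simps power_divide)
  have E2: "(1 / (2 ^ n * fact n)) * ((T/2)^n * (-4/T^2)^n) = (-1)^n / (T^n * fact n)"
  proof -
    have "(T/2)^n * (-4/T^2)^n = ((T/2) * (-4/T^2))^n" by (rule power_mult_distrib[symmetric])
    also have "(T/2) * (-4/T^2) = (-1) * (2 / T)" using assms by (simp add: field_simps power2_eq_square)
    finally have "(T/2)^n * (-4/T^2)^n = (-1)^n * (2^n / T^n)" by (simp only: power_mult_distrib power_divide)
    then show ?thesis using assms by simp
  qed
  have "legendreQ T n t = sqrt ((2 * real n + 1) / T) * ((1 / (2 ^ n * fact n)) * ((T/2)^n * (-4/T^2)^n * poly (Rn T n) t))"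
    unfolding legendreQ_def lp E1 ..
  also have "\<dots> = sqrt ((2 * real n + 1) / T) * (((1 / (2 ^ n * fact n)) * ((T/2)^n * (-4/T^2)^n)) * poly (Rn T n) t)"
    by (simp only: mult.assoc)
  also have "\<dots> = alpha T n * poly (Rn T n) t"
    unfolding E2 alpha_def by simp
  finally show ?thesis .
qed

lemma alpha_sq:
  assumes "T > 0"
  shows "alpha T n * alpha T n = (2 * real n + 1) / (T * (T^n * fact n)^2)"
proof -
  have g: "(a*b/c) * (a*b/c) = (a*a)*(b*b)/c^2" for a b c :: real
    by (simp add: divide_inverse power2_eq_square inverse_mult_distrib algebra_simps)
  have "alpha T n * alpha T n = (sqrt ((2 * real n + 1) / T) * sqrt ((2 * real n + 1) / T)) * ((-1)^n * (-1)^n) / (T^n * fact n)^2"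
    unfolding alpha_def by (rule g)
  also have "sqrt ((2 * real n + 1) / T) * sqrt ((2 * real n + 1) / T) = (2 * real n + 1) / T"
    using assms by (simp add: real_sqrt_mult_self)
  also have "((-1::real)^n * (-1)^n) = 1" by (simp add: power_mult_distrib[symmetric])
  finally show ?thesis by simp
qed

lemma Q_orthonormal:
  assumes "T > 0"
  shows "(LINT t:{0..T}|lborel. legendreQ T n t * legendreQ T m t) = (if n = m then 1 else 0)"
proof -
  have "(LINT t:{0..T}|lborel. legendreQ T n t * legendreQ T m t)
      = (LINT t:{0..T}|lborel. (alpha T n * alpha T m) * poly (Rn T n * Rn T m) t)"
    by (simp add: legendreQ_poly[OF assms] algebra_simps)
  also have "\<dots> = alpha T n * alpha T m * PI T (Rn T n * Rn T m)"
    unfolding PI_def by (rule set_integral_mult_right)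
  also have "\<dots> = (if n = m then 1 else 0)"
  proof (cases "n = m")
    case True
    have "alpha T n * alpha T n * PI T (Rn T n * Rn T n)
       = (2 * real n + 1) / (T * (T^n * fact n)^2) * ((fact n)^2 * T^(2*n+1) / (2 * real n + 1))"
      using assms by (simp add: alpha_sq Rn_norm)
    also have "\<dots> = 1"
    proof -
      have X: "T^(2*n+1) = T * (T^n)^2" by (simp add: power_mult[symmetric] mult.commute)
      have A: "2 * real n + 1 \<noteq> 0" by (simp add: add_nonneg_eq_0_iff)
      have B: "T^n \<noteq> 0" "T \<noteq> 0" "fact n \<noteq> (0::real)" using assms by simp_all
      have g: "\<And>A B T f X :: real. A \<noteq> 0 \<Longrightarrow> B \<noteq> 0 \<Longrightarrow> T \<noteq> 0 \<Longrightarrow> f \<noteq> 0 \<Longrightarrow> X = T*B^2 \<Longrightarrow>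
          A/(T*(B*f)^2) * (f^2 * X / A) = 1"
        by (simp add: field_simps power2_eq_square)
      show ?thesis by (rule g[OF A B(1) B(2) B(3) X])
    qed
    finally show ?thesis using True by simp
  next
    case False
    then show ?thesis using Rn_orth[of T m n] assms by simp
  qed
  finally show ?thesis .
qed

definition hp :: "real poly \<Rightarrow> real \<Rightarrow> real" where
  "hp p x = (if x > 0 then poly p (inverse x) * exp (- inverse x) else 0)"

definition dp :: "real poly \<Rightarrow> real poly" where
  "dp p = [:0,0,1:] * (p - pderiv p)"

lemma poly_exp_lim: "((\<lambda>s. poly r s * exp (- s)) \<longlongrightarrow> (0::real)) at_top"
proof -
  have "((\<lambda>s. \<Sum>i\<le>degree r. coeff r i * (s ^ i / exp s)) \<longlongrightarrow> (\<Sum>i\<le>degree r. coeff r i * 0)) at_top"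
    by (intro tendsto_sum tendsto_mult tendsto_const tendsto_power_div_exp_0)
  moreover have "(\<Sum>i\<le>degree r. coeff r i * (s ^ i / exp s)) = poly r s * exp (- s)" for s :: real
    by (simp add: poly_altdef sum_distrib_right exp_minus divide_inverse mult.assoc)
  ultimately show ?thesis by simp
qed

lemma hp_deriv0: "(hp p has_real_derivative 0) (at 0)"
proof -
  have L: "((\<lambda>h. hp p h / h) \<longlongrightarrow> 0) (at_left 0)"
  proof (rule tendsto_eventually)
    show "\<forall>\<^sub>F h in at_left 0. hp p h / h = 0"
      by (simp add: eventually_at_filter hp_def)
  qed
  have R: "((\<lambda>h. hp p h / h) \<longlongrightarrow> 0) (at_right 0)"
  proof -
    have "((\<lambda>h. poly (pCons 0 p) (inverse h) * exp (- inverse h)) \<longlongrightarrow> (0::real)) (at_right 0)"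
      by (rule filterlim_compose[OF poly_exp_lim filterlim_inverse_at_top_right])
    moreover have "\<forall>\<^sub>F h in at_right 0. poly (pCons 0 p) (inverse h) * exp (- inverse h) = hp p h / h"
      by (simp add: eventually_at_filter hp_def divide_inverse)
    ultimately show ?thesis by (rule Lim_transform_eventually)
  qed
  have "((\<lambda>h. hp p h / h) \<longlongrightarrow> 0) (at 0)"
    using filterlim_split_at[OF L R] .
  then show ?thesis unfolding DERIV_def by (simp add: hp_def)
qed

lemma hp_deriv: "(hp p has_real_derivative hp (dp p) x) (at x)"
proof -
  consider "x > 0" | "x < 0" | "x = 0" by linarith
  then show ?thesis
  proof cases
    case 1
    have d1: "((\<lambda>y. inverse y) has_real_derivative - (inverse x ^ 2)) (at x)"
      using DERIV_inverse[of x UNIV] 1 by (simp add: power2_eq_square)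
    have d2: "((\<lambda>y. poly p (inverse y)) has_real_derivative poly (pderiv p) (inverse x) * (- (inverse x ^ 2))) (at x)"
      by (rule DERIV_chain2[OF poly_DERIV d1])
    have d3: "((\<lambda>y. exp (- inverse y)) has_real_derivative exp (- inverse x) * (inverse x ^ 2)) (at x)"
      using DERIV_chain2[OF DERIV_exp DERIV_minus[OF d1]] by simp
    have d4: "((\<lambda>y. poly p (inverse y) * exp (- inverse y)) has_real_derivative hp (dp p) x) (at x)"
      by (rule DERIV_cong[OF DERIV_mult[OF d2 d3]])
         (use 1 in \<open>simp add: hp_def dp_def algebra_simps power2_eq_square\<close>)
    show ?thesis
      by (rule has_field_derivative_transform_within_open[OF d4, of "{0<..}"]) (use 1 in \<open>auto simp: hp_def\<close>)
  next
    case 2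
    have "((\<lambda>y. 0) has_real_derivative hp (dp p) x) (at x)"
      using 2 by (simp add: hp_def)
    then show ?thesis
      by (rule has_field_derivative_transform_within_open[of _ _ _ "{..<0}"]) (use 2 in \<open>auto simp: hp_def\<close>)
  next
    case 3
    then show ?thesis using hp_deriv0[of p] by (simp add: hp_def)
  qed
qed

definition FF :: "real \<Rightarrow> real \<Rightarrow> real poly \<Rightarrow> real poly \<Rightarrow> real poly \<Rightarrow> real \<Rightarrow> real" where
  "FF T s p1 p2 q t = hp p1 (s * t - 1) * hp p2 (s * (T - t) - 1) * (exp (- t) * poly q t)"

lemma expoly_deriv: "((\<lambda>t. exp (- t) * poly q t) has_real_derivative exp (- t) * poly (pderiv q - q) t) (at t)"
proof -
  have "((\<lambda>t. exp (- t)) has_real_derivative exp (- t) * (- 1)) (at t)"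
    using DERIV_chain2[OF DERIV_exp DERIV_minus[OF DERIV_ident]] by simp
  from DERIV_mult[OF this poly_DERIV[of q t]] show ?thesis
    by (rule DERIV_cong) (simp add: algebra_simps)
qed

lemma FF_deriv:
  "(FF T s p1 p2 q has_real_derivative
     FF T s (dp p1) p2 (smult s q) t + FF T s p1 (dp p2) (smult (- s) q) t + FF T s p1 p2 (pderiv q - q) t) (at t)"
proof -
  have a1: "((\<lambda>t. s * t - 1) has_real_derivative s) (at t)"
    by (auto intro!: derivative_eq_intros)
  have a2: "((\<lambda>t. s * (T - t) - 1) has_real_derivative - s) (at t)"
    by (auto intro!: derivative_eq_intros)
  have d1: "((\<lambda>t. hp p1 (s * t - 1)) has_real_derivative hp (dp p1) (s * t - 1) * s) (at t)"
    by (rule DERIV_chain2[OF hp_deriv a1])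
  have d2: "((\<lambda>t. hp p2 (s * (T - t) - 1)) has_real_derivative hp (dp p2) (s * (T - t) - 1) * (- s)) (at t)"
    by (rule DERIV_chain2[OF hp_deriv a2])
  have "((\<lambda>t. hp p1 (s * t - 1) * hp p2 (s * (T - t) - 1) * (exp (- t) * poly q t)) has_real_derivative
      (hp (dp p1) (s * t - 1) * s * hp p2 (s * (T - t) - 1) + hp (dp p2) (s * (T - t) - 1) * (- s) * hp p1 (s * t - 1))
        * (exp (- t) * poly q t) + exp (- t) * poly (pderiv q - q) t * (hp p1 (s * t - 1) * hp p2 (s * (T - t) - 1))) (at t)"
    by (rule DERIV_mult[OF DERIV_mult[OF d1 d2] expoly_deriv])
  then show ?thesis unfolding FF_def[abs_def]
    by (rule DERIV_cong) (simp add: algebra_simps)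
qed

definition Fs :: "real \<Rightarrow> real \<Rightarrow> (real poly \<times> real poly \<times> real poly) list \<Rightarrow> real \<Rightarrow> real" where
  "Fs T s L t = sum_list (map (\<lambda>(p1,p2,q). FF T s p1 p2 q t) L)"

definition dL :: "real \<Rightarrow> (real poly \<times> real poly \<times> real poly) list \<Rightarrow> (real poly \<times> real poly \<times> real poly) list" where
  "dL s L = concat (map (\<lambda>(p1,p2,q). [(dp p1, p2, smult s q), (p1, dp p2, smult (- s) q), (p1, p2, pderiv q - q)]) L)"

lemma Fs_Nil: "Fs T s [] t = 0" by (simp add: Fs_def)
lemma Fs_Cons: "Fs T s ((p1,p2,q) # L) t = FF T s p1 p2 q t + Fs T s L t" by (simp add: Fs_def)
lemma dL_Nil: "dL s [] = []" by (simp add: dL_def)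
lemma dL_Cons: "dL s ((p1,p2,q) # L) = [(dp p1, p2, smult s q), (p1, dp p2, smult (- s) q), (p1, p2, pderiv q - q)] @ dL s L"
  by (simp add: dL_def)
lemma Fs_append: "Fs T s (L1 @ L2) t = Fs T s L1 t + Fs T s L2 t" by (simp add: Fs_def)

lemma Fs_deriv: "(Fs T s L has_real_derivative Fs T s (dL s L) t) (at t)"
proof (induction L)
  case Nil
  then show ?case by (simp add: Fs_Nil[abs_def] dL_Nil)
next
  case (Cons a L)
  obtain p1 p2 q where a: "a = (p1,p2,q)" by (cases a) auto
  have "((\<lambda>t. FF T s p1 p2 q t + Fs T s L t) has_real_derivative
     (FF T s (dp p1) p2 (smult s q) t + FF T s p1 (dp p2) (smult (- s) q) t + FF T s p1 p2 (pderiv q - q) t)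
     + Fs T s (dL s L) t) (at t)"
    by (rule DERIV_add[OF FF_deriv Cons.IH])
  then show ?case unfolding a
    by (simp add: Fs_Cons[abs_def] dL_Cons Fs_append Fs_Nil add.assoc)
qed

definition smooth :: "(real \<Rightarrow> real) \<Rightarrow> bool" where
  "smooth f \<longleftrightarrow> (\<forall>j x. ((deriv ^^ j) f) differentiable (at x))"

lemma smooth_classI:
  assumes "f \<in> A" "\<And>g. g \<in> A \<Longrightarrow> \<exists>g'\<in>A. \<forall>x. (g has_real_derivative g' x) (at x)"
  shows "smooth f"
proof -
  have all: "(deriv^^j) f \<in> A" for j
  proof (induction j)
    case 0 then show ?case using assms(1) by simp
  next
    case (Suc j)
    obtain g' where g': "g' \<in> A" "\<And>x. ((deriv^^j) f has_real_derivative g' x) (at x)"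
      using assms(2)[OF Suc.IH] by blast
    have "deriv ((deriv^^j) f) = g'" by (rule ext, rule DERIV_imp_deriv, rule g'(2))
    then show ?case using g'(1) by simp
  qed
  show ?thesis unfolding smooth_def
  proof (intro allI)
    fix j x
    obtain g' where "\<And>x. ((deriv^^j) f has_real_derivative g' x) (at x)"
      using assms(2)[OF all[of j]] by blast
    then show "(deriv^^j) f differentiable (at x)"
      unfolding real_differentiable_def by blast
  qed
qed

lemma Fs_smooth: "smooth (Fs T s L)"
  by (rule smooth_classI[of _ "range (Fs T s)"]) (auto intro: Fs_deriv)

lemma hp_nonpos: "x \<le> 0 \<Longrightarrow> hp p x = 0" by (simp add: hp_def)

lemma test_fun_Fs:
  assumes "T > 0" "s * T \<ge> 2"
  shows "test_fun T (Fs T s [(1,1,q)])"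
proof -
  have s: "s > 0"
  proof (rule ccontr)
    assume "\<not> s > 0"
    then have "s * T \<le> 0" using assms(1) by (simp add: mult_nonpos_nonneg)
    then show False using assms(2) by simp
  qed
  have "\<forall>x. x \<notin> {1/s..T - 1/s} \<longrightarrow> Fs T s [(1,1,q)] x = 0"
  proof (intro allI impI)
    fix x assume x: "x \<notin> {1/s..T - 1/s}"
    then consider "x < 1/s" | "x > T - 1/s" by auto
    then show "Fs T s [(1,1,q)] x = 0"
    proof cases
      case 1
      then have "s * x - 1 \<le> 0" using s by (simp add: field_simps)
      then show ?thesis by (simp add: Fs_def FF_def hp_nonpos)
    next
      case 2
      then have "s * (T - x) - 1 \<le> 0" using s by (simp add: field_simps)
      then show ?thesis by (simp add: Fs_def FF_def hp_nonpos)
    qed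
  qed
  moreover have "0 < 1/s" "1/s \<le> T - 1/s" "T - 1/s < T" using s assms by (auto simp: field_simps)
  ultimately show ?thesis unfolding test_fun_def using Fs_smooth[unfolded smooth_def] by blast
qed

lemma SI_sum:
  assumes "finite I" "\<And>i. i \<in> I \<Longrightarrow> set_integrable M A (f i)"
  shows "(LINT x:A|M. (\<Sum>i\<in>I. f i x)) = (\<Sum>i\<in>I. (LINT x:A|M. f i x :: real))"
proof -
  have e: "(\<lambda>x. indicator A x *\<^sub>R (\<Sum>i\<in>I. f i x)) = (\<lambda>x. \<Sum>i\<in>I. indicator A x *\<^sub>R f i x)"
    by (rule ext) (rule scaleR_sum_right)
  show ?thesis using assms unfolding set_lebesgue_integral_def set_integrable_def e
    by (intro Bochner_Integration.integral_sum) (use assms(2) in \<open>simp add: set_integrable_def\<close>)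
qed

lemma SI_sum_int:
  assumes "\<And>i. i \<in> I \<Longrightarrow> set_integrable M A (f i)"
  shows "set_integrable M A (\<lambda>x. (\<Sum>i\<in>I. f i x :: real))"
proof -
  have e: "(\<lambda>x. indicator A x *\<^sub>R (\<Sum>i\<in>I. f i x)) = (\<lambda>x. \<Sum>i\<in>I. indicator A x *\<^sub>R f i x)"
    by (rule ext) (rule scaleR_sum_right)
  show ?thesis unfolding set_integrable_def e
    by (rule Bochner_Integration.integrable_sum) (use assms in \<open>simp add: set_integrable_def\<close>)
qed

lemma SI_nonneg:
  assumes "\<And>x. x \<in> A \<Longrightarrow> 0 \<le> f x"
  shows "0 \<le> (LINT x:A|M. f x :: real)"
  unfolding set_lebesgue_integral_def
  by (rule integral_nonneg_AE) (use assms in \<open>auto split: split_indicator\<close>)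

lemma cont_bound:
  assumes "continuous_on {0..T} (f :: real \<Rightarrow> real)"
  obtains M where "M \<ge> 0" "\<And>t. t \<in> {0..T} \<Longrightarrow> \<bar>f t\<bar> \<le> M"
proof -
  have "bounded (f ` {0..T})"
    by (rule compact_imp_bounded[OF compact_continuous_image[OF assms compact_Icc]])
  then obtain M where M: "\<forall>x\<in>f ` {0..T}. norm x \<le> M" unfolding bounded_iff by blast
  have "\<bar>f t\<bar> \<le> max M 0" if "t \<in> {0..T}" for t
  proof -
    have "norm (f t) \<le> M" using M that by blast
    then show ?thesis by simp
  qed
  then show ?thesis using that[of "max M 0"] by auto
qed

lemma L2_cont:
  assumes "continuous_on {0..T} f"
  shows "L2_on T f"
  unfolding L2_on_def set_borel_measurable_def
proof
  show "(\<lambda>x. indicator {0..T} x *\<^sub>R f x) \<in> borel_measurable lborel"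
    using borel_measurable_continuous_on_indicator[OF _ assms] by simp
  show "set_integrable lborel {0..T} (\<lambda>t. (f t)\<^sup>2)"
    by (rule borel_integrable_atLeastAtMost') (intro continuous_intros assms)
qed

lemma L2_meas: "L2_on T f \<Longrightarrow> (\<lambda>x. indicator {0..T} x * f x) \<in> borel_measurable borel"
  unfolding L2_on_def set_borel_measurable_def by simp

lemma abs_prod_le: "\<bar>a * b\<bar> \<le> a\<^sup>2 + (b::real)\<^sup>2"
proof -
  have "2 * \<bar>a\<bar> * \<bar>b\<bar> \<le> \<bar>a\<bar>\<^sup>2 + \<bar>b\<bar>\<^sup>2" by (rule sum_squares_bound)
  then have h: "2 * (\<bar>a\<bar> * \<bar>b\<bar>) \<le> a\<^sup>2 + b\<^sup>2" by (simp add: mult.assoc)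
  have "0 \<le> \<bar>a\<bar> * \<bar>b\<bar>" by simp
  then have "\<bar>a\<bar> * \<bar>b\<bar> \<le> a\<^sup>2 + b\<^sup>2" using h by linarith
  then show ?thesis by (simp add: abs_mult)
qed

lemma L2_prod_int:
  assumes "L2_on T a" "L2_on T b"
  shows "set_integrable lborel {0..T} (\<lambda>t. a t * b t)"
  unfolding set_integrable_def
proof (rule Bochner_Integration.integrable_bound)
  show "integrable lborel (\<lambda>x. indicator {0..T} x *\<^sub>R ((a x)\<^sup>2 + (b x)\<^sup>2))"
    using set_integral_add(1)[of lborel "{0..T}" "\<lambda>t. (a t)\<^sup>2" "\<lambda>t. (b t)\<^sup>2"] assms
    unfolding L2_on_def set_integrable_def by simp
  have "(\<lambda>x. indicator {0..T} x *\<^sub>R (a x * b x)) = (\<lambda>x. (indicator {0..T} x * a x) * (indicator {0..T} x * b x))"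
    by (auto split: split_indicator)
  then show "(\<lambda>x. indicator {0..T} x *\<^sub>R (a x * b x)) \<in> borel_measurable lborel"
    using L2_meas[OF assms(1)] L2_meas[OF assms(2)] by simp
  show "AE x in lborel. norm (indicator {0..T} x *\<^sub>R (a x * b x)) \<le> norm (indicator {0..T} x *\<^sub>R ((a x)\<^sup>2 + (b x)\<^sup>2))"
    using abs_prod_le by (auto split: split_indicator)
qed

lemma L2_mult_cont:
  assumes "L2_on T g" "continuous_on {0..T} f"
  shows "L2_on T (\<lambda>t. g t * f t)"
proof -
  obtain M where M: "M \<ge> 0" "\<And>t. t \<in> {0..T} \<Longrightarrow> \<bar>f t\<bar> \<le> M" using cont_bound[OF assms(2)] by blast
  have m1: "(\<lambda>x. indicator {0..T} x * f x) \<in> borel_measurable borel"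
    using borel_measurable_continuous_on_indicator[OF _ assms(2)] by simp
  have eq: "(\<lambda>x. indicator {0..T} x *\<^sub>R (g x * f x)) = (\<lambda>x. (indicator {0..T} x * g x) * (indicator {0..T} x * f x))"
    by (auto split: split_indicator)
  have meas: "(\<lambda>x. indicator {0..T} x *\<^sub>R (g x * f x)) \<in> borel_measurable lborel"
    unfolding eq using L2_meas[OF assms(1)] m1 by simp
  have "set_integrable lborel {0..T} (\<lambda>t. (g t * f t)\<^sup>2)"
    unfolding set_integrable_def
  proof (rule Bochner_Integration.integrable_bound)
    have "integrable lborel (\<lambda>x. M\<^sup>2 * (indicator {0..T} x *\<^sub>R (g x)\<^sup>2))"
      by (rule integrable_mult_right) (use assms(1) in \<open>simp add: L2_on_def set_integrable_def\<close>)
    then show "integrable lborel (\<lambda>x. indicator {0..T} x *\<^sub>R (M\<^sup>2 * (g x)\<^sup>2))"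
      by (simp add: algebra_simps)
    have "(\<lambda>x. indicator {0..T} x *\<^sub>R (g x * f x)\<^sup>2) = (\<lambda>x. (indicator {0..T} x *\<^sub>R (g x * f x)) * (indicator {0..T} x *\<^sub>R (g x * f x)))"
      by (auto split: split_indicator simp: power2_eq_square)
    then show "(\<lambda>x. indicator {0..T} x *\<^sub>R (g x * f x)\<^sup>2) \<in> borel_measurable lborel"
      using meas by simp
    show "AE x in lborel. norm (indicator {0..T} x *\<^sub>R (g x * f x)\<^sup>2) \<le> norm (indicator {0..T} x *\<^sub>R (M\<^sup>2 * (g x)\<^sup>2))"
    proof (rule AE_I2)
      fix x
      show "norm (indicator {0..T} x *\<^sub>R (g x * f x)\<^sup>2) \<le> norm (indicator {0..T} x *\<^sub>R (M\<^sup>2 * (g x)\<^sup>2))"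
      proof (cases "x \<in> {0..T}")
        case True
        have "\<bar>f x\<bar>\<^sup>2 \<le> M\<^sup>2" by (rule power_mono[OF M(2)[OF True] abs_ge_zero])
        then have "(f x)\<^sup>2 \<le> M\<^sup>2" by simp
        then have "(g x * f x)\<^sup>2 \<le> M\<^sup>2 * (g x)\<^sup>2"
          using mult_right_mono[of "(f x)\<^sup>2" "M\<^sup>2" "(g x)\<^sup>2"] by (simp add: power_mult_distrib mult.commute)
        then show ?thesis using True by simp
      qed simp
    qed
  qed
  then show ?thesis unfolding L2_on_def set_borel_measurable_def using meas by simp
qed

lemma bessel:
  assumes g: "L2_on T g" and S: "finite S"
    and f: "\<And>n. n \<in> S \<Longrightarrow> continuous_on {0..T} (f n)"
    and orth: "\<And>n m. n \<in> S \<Longrightarrow> m \<in> S \<Longrightarrow> (LINT t:{0..T}|lborel. f n t * f m t) = (if n = m then 1 else 0)"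
  shows "(\<Sum>n\<in>S. (LINT t:{0..T}|lborel. g t * f n t)\<^sup>2) \<le> (LINT t:{0..T}|lborel. (g t)\<^sup>2)"
proof -
  define a where "a n = (LINT t:{0..T}|lborel. g t * f n t)" for n
  have fL2: "L2_on T (f n)" if "n \<in> S" for n using L2_cont[OF f[OF that]] .
  have i1: "set_integrable lborel {0..T} (\<lambda>t. (g t)\<^sup>2)" using g unfolding L2_on_def by simp
  have i2: "set_integrable lborel {0..T} (\<lambda>t. 2 * a n * (g t * f n t))" if "n \<in> S" for n
    using L2_prod_int[OF g fL2[OF that]] by simp
  have i3: "set_integrable lborel {0..T} (\<lambda>t. a n * a m * (f n t * f m t))" if "n \<in> S" "m \<in> S" for n m
    using L2_prod_int[OF fL2[OF that(1)] fL2[OF that(2)]] by simp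
  have pw: "(g t - (\<Sum>n\<in>S. a n * f n t))\<^sup>2 = (g t)\<^sup>2 - (\<Sum>n\<in>S. 2 * a n * (g t * f n t))
      + (\<Sum>n\<in>S. \<Sum>m\<in>S. a n * a m * (f n t * f m t))" for t
  proof -
    have "(\<Sum>n\<in>S. a n * f n t)\<^sup>2 = (\<Sum>n\<in>S. \<Sum>m\<in>S. a n * a m * (f n t * f m t))"
      by (simp add: power2_eq_square sum_product algebra_simps)
    moreover have "2 * g t * (\<Sum>n\<in>S. a n * f n t) = (\<Sum>n\<in>S. 2 * a n * (g t * f n t))"
      by (simp add: sum_distrib_left algebra_simps)
    ultimately show ?thesis by (simp add: power2_diff)
  qed
  have "0 \<le> (LINT t:{0..T}|lborel. (g t - (\<Sum>n\<in>S. a n * f n t))\<^sup>2)"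
    by (rule SI_nonneg) simp
  also have "\<dots> = (LINT t:{0..T}|lborel. (g t)\<^sup>2) - (LINT t:{0..T}|lborel. (\<Sum>n\<in>S. 2 * a n * (g t * f n t)))
      + (LINT t:{0..T}|lborel. (\<Sum>n\<in>S. \<Sum>m\<in>S. a n * a m * (f n t * f m t)))"
  proof -
    have A: "set_integrable lborel {0..T} (\<lambda>t. (g t)\<^sup>2 - (\<Sum>n\<in>S. 2 * a n * (g t * f n t)))"
      by (rule set_integral_diff(1)[OF i1 SI_sum_int[OF i2]])
    have B: "set_integrable lborel {0..T} (\<lambda>t. \<Sum>n\<in>S. \<Sum>m\<in>S. a n * a m * (f n t * f m t))"
      by (intro SI_sum_int i3)
    show ?thesis by (simp only: pw set_integral_add(2)[OF A B] set_integral_diff(2)[OF i1 SI_sum_int[OF i2]])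
  qed
  also have "(LINT t:{0..T}|lborel. (\<Sum>n\<in>S. 2 * a n * (g t * f n t))) = (\<Sum>n\<in>S. 2 * (a n)\<^sup>2)"
    by (subst SI_sum[OF S i2]) (auto simp: a_def power2_eq_square intro!: sum.cong)
  also have "(LINT t:{0..T}|lborel. (\<Sum>n\<in>S. \<Sum>m\<in>S. a n * a m * (f n t * f m t))) = (\<Sum>n\<in>S. \<Sum>m\<in>S. a n * a m * (if n = m then 1 else 0))"
    by (subst SI_sum[OF S], rule SI_sum_int, rule i3, assumption, assumption)
       (intro sum.cong refl, subst SI_sum[OF S i3], assumption, assumption, intro sum.cong refl, simp add: orth)
  also have "\<dots> = (\<Sum>n\<in>S. (a n)\<^sup>2)"
    using S by (simp add: power2_eq_square if_distrib[of "(*) _"] sum.delta cong: if_cong)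
  finally have "0 \<le> (LINT t:{0..T}|lborel. (g t)\<^sup>2) - (\<Sum>n\<in>S. (a n)\<^sup>2)"
    by (simp add: sum_distrib_left[symmetric])
  then show ?thesis unfolding a_def by simp
qed

lemma hp1_eq: "hp 1 x = (if x > 0 then exp (- inverse x) else 0)"
  by (simp add: hp_def)

lemma hpd1_eq: "hp (dp 1) x = (if x > 0 then inverse x * inverse x * exp (- inverse x) else 0)"
  by (simp add: hp_def dp_def)

lemma hp1_bounds: "0 \<le> hp 1 x" "hp 1 x \<le> 1"
  by (auto simp: hp1_eq)

lemma hpd1_nonneg: "0 \<le> hp (dp 1) x"
  by (auto simp: hpd1_eq)

lemma hpd1_bound: "hp (dp 1) x * (x + 1) \<le> 4"
proof (cases "x > 0")
  case True
  define y where "y = inverse x"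
  have y: "y > 0" using True by (simp add: y_def)
  have x: "x = inverse y" using True by (simp add: y_def)
  have e1: "1 + y/2 \<le> exp (y/2)" by (rule exp_ge_add_one_self)
  have "(1 + y/2)^2 \<le> exp (y/2) ^ 2" by (rule power_mono[OF e1]) (use y in linarith)
  also have "exp (y/2) ^ 2 = exp y" by (simp add: power2_eq_square exp_add[symmetric])
  finally have e2: "(1 + y/2)^2 \<le> exp y" .
  have "y + y * y \<le> 4 * (1 + y/2)^2" using y by (simp add: power2_eq_square algebra_simps)
  also have "\<dots> \<le> 4 * exp y" using e2 by simp
  finally have e3: "y + y * y \<le> 4 * exp y" .
  have "hp (dp 1) x * (x + 1) = (y + y * y) * exp (- y)"
    using True y by (simp add: hpd1_eq x field_simps)
  also have "\<dots> \<le> 4 * exp y * exp (- y)"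
    by (rule mult_right_mono[OF e3]) simp
  also have "\<dots> = 4" by (simp add: exp_minus)
  finally show ?thesis .
qed (simp add: hpd1_eq)

lemma hp1_lim: "((\<lambda>x. hp 1 x) \<longlongrightarrow> 1) at_top"
proof -
  have "((\<lambda>x::real. exp (- inverse x)) \<longlongrightarrow> 1) at_top" by real_asymp
  moreover have "\<forall>\<^sub>F x in at_top. exp (- inverse x) = hp 1 x"
    using eventually_gt_at_top[of 0] by eventually_elim (simp add: hp1_eq)
  ultimately show ?thesis by (rule Lim_transform_eventually)
qed

lemma hpd1_lim: "((\<lambda>x. (x + 1) * hp (dp 1) x) \<longlongrightarrow> 0) at_top"
proof -
  have "((\<lambda>x::real. (x + 1) * (inverse x * inverse x * exp (- inverse x))) \<longlongrightarrow> 0) at_top" by real_asymp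
  moreover have "\<forall>\<^sub>F x in at_top. (x + 1) * (inverse x * inverse x * exp (- inverse x)) = (x + 1) * hp (dp 1) x"
    using eventually_gt_at_top[of 0] by eventually_elim (simp add: hpd1_eq)
  ultimately show ?thesis by (rule Lim_transform_eventually)
qed

definition sc :: "real \<Rightarrow> nat \<Rightarrow> real" where "sc T i = (real i + 3) / T"

lemma sc_lim:
  assumes "T > 0" "c > 0"
  shows "filterlim (\<lambda>i. sc T i * c - 1) at_top sequentially"
proof -
  have "filterlim (\<lambda>i::nat. (real i + 3) / T * c - 1) at_top sequentially"
    using assms by real_asymp
  then show ?thesis by (simp add: sc_def)
qed

lemma DCT_set:
  fixes u c0 :: "real \<Rightarrow> real" and c :: "nat \<Rightarrow> real \<Rightarrow> real"
  assumes u: "L2_on T u" and c: "\<And>i. continuous_on {0..T} (c i)" and c0: "continuous_on {0..T} c0"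
    and B: "\<And>i t. t \<in> {0..T} \<Longrightarrow> \<bar>c i t\<bar> \<le> B"
    and lim: "\<And>t. t \<in> {0<..<T} \<Longrightarrow> (\<lambda>i. c i t) \<longlonglongrightarrow> c0 t"
  shows "(\<lambda>i. LINT t:{0..T}|lborel. u t * c i t) \<longlonglongrightarrow> (LINT t:{0..T}|lborel. u t * c0 t)"
proof -
  have int0: "set_integrable lborel {0..T} (\<lambda>t. u t * c0 t)" by (rule L2_prod_int[OF u L2_cont[OF c0]])
  have inti: "set_integrable lborel {0..T} (\<lambda>t. u t * c i t)" for i by (rule L2_prod_int[OF u L2_cont[OF c]])
  have intu: "set_integrable lborel {0..T} (\<lambda>t. u t * 1)"
    by (rule L2_prod_int[OF u L2_cont]) (rule continuous_on_const)
  have intw: "integrable lborel (\<lambda>t. B * (indicator {0..T} t *\<^sub>R \<bar>u t\<bar>))"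
    by (rule integrable_mult_right) (use set_integrable_abs[OF intu] in \<open>simp add: set_integrable_def\<close>)
  show ?thesis unfolding set_lebesgue_integral_def
  proof (rule integral_dominated_convergence[where w = "\<lambda>t. B * (indicator {0..T} t *\<^sub>R \<bar>u t\<bar>)"])
    show "(\<lambda>x. indicator {0..T} x *\<^sub>R (u x * c0 x)) \<in> borel_measurable lborel"
      using borel_measurable_integrable[OF int0[unfolded set_integrable_def]] .
    show "(\<lambda>x. indicator {0..T} x *\<^sub>R (u x * c i x)) \<in> borel_measurable lborel" for i
      using borel_measurable_integrable[OF inti[unfolded set_integrable_def]] .
    show "integrable lborel (\<lambda>t. B * (indicator {0..T} t *\<^sub>R \<bar>u t\<bar>))" by (rule intw)
    have "AE t in lborel. t \<noteq> 0 \<and> t \<noteq> T" by (intro AE_conjI AE_lborel_singleton)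
    then show "AE x in lborel. (\<lambda>i. indicator {0..T} x *\<^sub>R (u x * c i x)) \<longlonglongrightarrow> indicator {0..T} x *\<^sub>R (u x * c0 x)"
    proof eventually_elim
      case (elim t)
      show ?case
      proof (cases "t \<in> {0..T}")
        case True
        then have "t \<in> {0<..<T}" using elim by auto
        then show ?thesis using True by (auto intro!: tendsto_intros lim)
      qed simp
    qed
    show "AE x in lborel. norm (indicator {0..T} x *\<^sub>R (u x * c i x)) \<le> B * (indicator {0..T} x *\<^sub>R \<bar>u x\<bar>)" for i
    proof (rule AE_I2)
      fix t
      show "norm (indicator {0..T} t *\<^sub>R (u t * c i t)) \<le> B * (indicator {0..T} t *\<^sub>R \<bar>u t\<bar>)"
      proof (cases "t \<in> {0..T}")
        case True
        have "\<bar>u t\<bar> * \<bar>c i t\<bar> \<le> \<bar>u t\<bar> * B" by (rule mult_left_mono[OF B[OF True]]) simp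
        then show ?thesis using True by (simp add: abs_mult mult.commute)
      qed simp
    qed
  qed
qed

lemma FF_cont: "continuous_on S (FF T s p1 p2 q)"
  by (rule continuous_at_imp_continuous_on) (blast intro: DERIV_isCont FF_deriv)

lemma prod5_bound:
  fixes a b e d r A D M :: real
  assumes "0 \<le> a" "a \<le> A" "0 \<le> b" "b \<le> 1" "0 \<le> e" "e \<le> 1" "0 \<le> d" "d \<le> D" "\<bar>r\<bar> \<le> M"
  shows "\<bar>a * b * e * d * r\<bar> \<le> A * D * M"
proof -
  have A0: "0 \<le> A" "0 \<le> D" using assms by linarith+
  have h1: "a * b \<le> A" using mult_mono[of a A b 1] assms by simp
  have h2: "a * b * e \<le> A" using mult_mono[of "a*b" A e 1] assms h1 by simp
  have h3: "a * b * e * d \<le> A * D" by (rule mult_mono[OF h2]) (use assms A0 in auto)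
  have h4: "a * b * e * d * \<bar>r\<bar> \<le> A * D * M" by (rule mult_mono[OF h3]) (use assms A0 in auto)
  moreover have "\<bar>a * b * e * d * r\<bar> = a * b * e * d * \<bar>r\<bar>"
    using assms by (simp add: abs_mult)
  ultimately show ?thesis by simp
qed

lemma sc_pos: "T > 0 \<Longrightarrow> sc T i > 0" by (simp add: sc_def)
lemma sc_T: "T > 0 \<Longrightarrow> sc T i * T \<ge> 2" by (simp add: sc_def)

lemma hp1_comp_lim:
  assumes "T > 0" "c > 0"
  shows "(\<lambda>i. hp 1 (sc T i * c - 1)) \<longlonglongrightarrow> 1"
  by (rule filterlim_compose[OF hp1_lim sc_lim[OF assms]])

lemma hpd1_comp_lim:
  assumes "T > 0" "c > 0"
  shows "(\<lambda>i. sc T i * hp (dp 1) (sc T i * c - 1)) \<longlonglongrightarrow> 0"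
proof -
  have "(\<lambda>i. ((sc T i * c - 1) + 1) * hp (dp 1) (sc T i * c - 1)) \<longlonglongrightarrow> 0"
    by (rule filterlim_compose[OF hpd1_lim sc_lim[OF assms]])
  then have "(\<lambda>i. ((sc T i * c - 1) + 1) * hp (dp 1) (sc T i * c - 1) / c) \<longlonglongrightarrow> 0 / c"
    by (intro tendsto_divide tendsto_const) (use assms in auto)
  moreover have "((sc T i * c - 1) + 1) * hp (dp 1) (sc T i * c - 1) / c = sc T i * hp (dp 1) (sc T i * c - 1)" for i
    using assms by simp
  ultimately show ?thesis by simp
qed

lemma A_bound_term:
  fixes s t T x :: real
  assumes "s > 0" "0 \<le> t" "t \<le> T" "\<bar>poly q t\<bar> \<le> M"
  shows "\<bar>hp (dp 1) (s * t - 1) * hp 1 y * (exp (- t) * (s * poly (rho T * q) t))\<bar> \<le> 4 * T * M"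
proof -
  have "hp (dp 1) (s * t - 1) * hp 1 y * (exp (- t) * (s * poly (rho T * q) t))
      = (hp (dp 1) (s * t - 1) * ((s * t - 1) + 1)) * hp 1 y * exp (- t) * (T - t) * poly q t"
    by (simp add: poly_rho algebra_simps)
  also have "\<bar>\<dots>\<bar> \<le> 4 * T * M"
  proof -
    have hb: "hp (dp 1) (s * t - 1) * ((s * t - 1) + 1) \<le> 4" by (rule hpd1_bound)
    show ?thesis
      by (rule prod5_bound) (use assms hb in \<open>auto simp: hp1_bounds mult_nonneg_nonneg hpd1_nonneg\<close>)
  qed
  finally show ?thesis .
qed

lemma A_bound_term2:
  fixes s t T x :: real
  assumes "s > 0" "0 \<le> t" "t \<le> T" "\<bar>poly q t\<bar> \<le> M"
  shows "\<bar>hp 1 x * hp (dp 1) (s * (T - t) - 1) * (exp (- t) * (- s * poly (rho T * q) t))\<bar> \<le> 4 * T * M"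
proof -
  have "hp 1 x * hp (dp 1) (s * (T - t) - 1) * (exp (- t) * (- s * poly (rho T * q) t))
      = - ((hp (dp 1) (s * (T - t) - 1) * ((s * (T - t) - 1) + 1)) * hp 1 x * exp (- t) * t * poly q t)"
    by (simp add: poly_rho algebra_simps)
  also have "\<bar>\<dots>\<bar> \<le> 4 * T * M"
    unfolding abs_minus_cancel
  proof -
    have hb: "hp (dp 1) (s * (T - t) - 1) * ((s * (T - t) - 1) + 1) \<le> 4" by (rule hpd1_bound)
    show "\<bar>hp (dp 1) (s * (T - t) - 1) * (s * (T - t) - 1 + 1) * hp 1 x * exp (- t) * t * poly q t\<bar> \<le> 4 * T * M"
      by (rule prod5_bound) (use assms hb in \<open>auto simp: hp1_bounds mult_nonneg_nonneg hpd1_nonneg\<close>)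
  qed
  finally show ?thesis .
qed

lemma ext1:
  assumes T: "T > 0" and f: "L2_on T f" and g: "L2_on T g"
    and H: "\<And>\<phi>. test_fun T \<phi> \<Longrightarrow> (LINT t:{0..T}|lborel. f t * deriv \<phi> t) = - (LINT t:{0..T}|lborel. g t * \<phi> t)"
  shows "(LINT t:{0..T}|lborel. f t * (exp (- t) * poly (pderiv (rho T * q) - rho T * q) t))
       = - (LINT t:{0..T}|lborel. g t * (exp (- t) * poly (rho T * q) t))"
proof -
  define Q where "Q = rho T * q"
  define s where "s i = sc T i" for i
  have s0: "s i > 0" for i using sc_pos[OF T] by (simp add: s_def)
  define A where "A i t = FF T (s i) (dp 1) 1 (smult (s i) Q) t + FF T (s i) 1 (dp 1) (smult (- s i) Q) t" for i t
  define B where "B i t = FF T (s i) 1 1 (pderiv Q - Q) t" for i t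
  define P where "P i t = FF T (s i) 1 1 Q t" for i t
  have dpsi: "deriv (Fs T (s i) [(1,1,Q)]) t = A i t + B i t" for i t
    using DERIV_imp_deriv[OF Fs_deriv[of T "s i" "[(1,1,Q)]" t]]
    by (simp add: Fs_def dL_def A_def B_def)
  have psi: "Fs T (s i) [(1,1,Q)] t = P i t" for i t by (simp add: Fs_def P_def)
  have Acont: "continuous_on {0..T} (A i)" for i
    unfolding A_def by (intro continuous_on_add FF_cont)
  have Bcont: "continuous_on {0..T} (B i)" for i unfolding B_def by (rule FF_cont)
  have Pcont: "continuous_on {0..T} (P i)" for i unfolding P_def by (rule FF_cont)
  have eq: "(LINT t:{0..T}|lborel. f t * A i t) + (LINT t:{0..T}|lborel. f t * B i t) = - (LINT t:{0..T}|lborel. g t * P i t)" for i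
  proof -
    have "test_fun T (Fs T (s i) [(1,1,Q)])"
      by (rule test_fun_Fs[OF T]) (use sc_T[OF T] in \<open>simp add: s_def\<close>)
    from H[OF this] have "(LINT t:{0..T}|lborel. f t * (A i t + B i t)) = - (LINT t:{0..T}|lborel. g t * P i t)"
      by (simp add: dpsi psi)
    moreover have "(LINT t:{0..T}|lborel. f t * (A i t + B i t)) = (LINT t:{0..T}|lborel. f t * A i t) + (LINT t:{0..T}|lborel. f t * B i t)"
      unfolding distrib_left
      by (rule set_integral_add(2)) (intro L2_prod_int f L2_cont Acont Bcont)+
    ultimately show ?thesis by simp
  qed
  define psi0 where "psi0 t = exp (- t) * poly Q t" for t
  define psi1 where "psi1 t = exp (- t) * poly (pderiv Q - Q) t" for t
  have psi0c: "continuous_on {0..T} psi0" unfolding psi0_def by (intro continuous_intros poly_cont)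
  have psi1c: "continuous_on {0..T} psi1" unfolding psi1_def by (intro continuous_intros poly_cont)
  obtain M0 where M0: "\<And>t. t \<in> {0..T} \<Longrightarrow> \<bar>psi0 t\<bar> \<le> M0" using cont_bound[OF psi0c] by blast
  obtain M1 where M1: "\<And>t. t \<in> {0..T} \<Longrightarrow> \<bar>psi1 t\<bar> \<le> M1" using cont_bound[OF psi1c] by blast
  obtain M2 where M2: "\<And>t. t \<in> {0..T} \<Longrightarrow> \<bar>poly q t\<bar> \<le> M2" using cont_bound[OF poly_cont] by blast
  have hh: "\<bar>hp 1 a * hp 1 b * z\<bar> \<le> \<bar>z\<bar>" for a b z
  proof -
    have "\<bar>hp 1 a * hp 1 b\<bar> \<le> 1 * 1" unfolding abs_mult
      by (rule mult_mono) (auto simp: hp1_bounds)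
    then show ?thesis using mult_right_mono[of "\<bar>hp 1 a * hp 1 b\<bar>" 1 "\<bar>z\<bar>"] by (simp add: abs_mult)
  qed
  have l3: "(\<lambda>i. LINT t:{0..T}|lborel. g t * P i t) \<longlonglongrightarrow> (LINT t:{0..T}|lborel. g t * psi0 t)"
  proof (rule DCT_set[OF g Pcont psi0c])
    show "\<bar>P i t\<bar> \<le> M0" if "t \<in> {0..T}" for i t
      using hh[of _ _ "psi0 t"] M0[OF that] unfolding P_def FF_def psi0_def by (meson order_trans)
    show "(\<lambda>i. P i t) \<longlonglongrightarrow> psi0 t" if "t \<in> {0<..<T}" for t
    proof -
      have "(\<lambda>i. hp 1 (sc T i * t - 1) * hp 1 (sc T i * (T - t) - 1) * psi0 t) \<longlonglongrightarrow> 1 * 1 * psi0 t"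
        by (intro tendsto_mult tendsto_const hp1_comp_lim T) (use that in auto)
      then show ?thesis by (simp add: P_def FF_def psi0_def s_def Q_def)
    qed
  qed
  have l2: "(\<lambda>i. LINT t:{0..T}|lborel. f t * B i t) \<longlonglongrightarrow> (LINT t:{0..T}|lborel. f t * psi1 t)"
  proof (rule DCT_set[OF f Bcont psi1c])
    show "\<bar>B i t\<bar> \<le> M1" if "t \<in> {0..T}" for i t
      using hh[of _ _ "psi1 t"] M1[OF that] unfolding B_def FF_def psi1_def by (meson order_trans)
    show "(\<lambda>i. B i t) \<longlonglongrightarrow> psi1 t" if "t \<in> {0<..<T}" for t
    proof -
      have "(\<lambda>i. hp 1 (sc T i * t - 1) * hp 1 (sc T i * (T - t) - 1) * psi1 t) \<longlonglongrightarrow> 1 * 1 * psi1 t"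
        by (intro tendsto_mult tendsto_const hp1_comp_lim T) (use that in auto)
      then show ?thesis by (simp add: B_def FF_def psi1_def s_def)
    qed
  qed
  have l1: "(\<lambda>i. LINT t:{0..T}|lborel. f t * A i t) \<longlonglongrightarrow> (LINT t:{0..T}|lborel. f t * 0)"
  proof (rule DCT_set[OF f Acont continuous_on_const])
    show "\<bar>A i t\<bar> \<le> 4 * T * M2 + 4 * T * M2" if "t \<in> {0..T}" for i t
    proof -
      have "\<bar>A i t\<bar> \<le> \<bar>FF T (s i) (dp 1) 1 (smult (s i) Q) t\<bar> + \<bar>FF T (s i) 1 (dp 1) (smult (- s i) Q) t\<bar>"
        unfolding A_def by (rule abs_triangle_ineq)
      also have "\<bar>FF T (s i) (dp 1) 1 (smult (s i) Q) t\<bar> \<le> 4 * T * M2"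
        unfolding FF_def Q_def poly_smult using that M2[OF that] s0[of i]
        by (intro A_bound_term) auto
      also have "\<bar>FF T (s i) 1 (dp 1) (smult (- s i) Q) t\<bar> \<le> 4 * T * M2"
        unfolding FF_def Q_def poly_smult using that M2[OF that] s0[of i]
        by (intro A_bound_term2) auto
      finally show ?thesis by simp
    qed
    show "(\<lambda>i. A i t) \<longlonglongrightarrow> 0" if t: "t \<in> {0<..<T}" for t
    proof -
      have "(\<lambda>i. (sc T i * hp (dp 1) (sc T i * t - 1)) * hp 1 (sc T i * (T - t) - 1) * psi0 t
              - hp 1 (sc T i * t - 1) * (sc T i * hp (dp 1) (sc T i * (T - t) - 1)) * psi0 t)
            \<longlonglongrightarrow> 0 * 1 * psi0 t - 1 * 0 * psi0 t"
        by (intro tendsto_diff tendsto_mult tendsto_const hp1_comp_lim hpd1_comp_lim T) (use t in auto)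
      moreover have "A i t = (sc T i * hp (dp 1) (sc T i * t - 1)) * hp 1 (sc T i * (T - t) - 1) * psi0 t
              - hp 1 (sc T i * t - 1) * (sc T i * hp (dp 1) (sc T i * (T - t) - 1)) * psi0 t" for i
        by (simp add: A_def FF_def psi0_def s_def algebra_simps)
      ultimately show ?thesis by simp
    qed
  qed
  have "(\<lambda>i. (LINT t:{0..T}|lborel. f t * A i t) + (LINT t:{0..T}|lborel. f t * B i t))
        \<longlonglongrightarrow> (LINT t:{0..T}|lborel. f t * 0) + (LINT t:{0..T}|lborel. f t * psi1 t)"
    by (rule tendsto_add[OF l1 l2])
  moreover have "(\<lambda>i. (LINT t:{0..T}|lborel. f t * A i t) + (LINT t:{0..T}|lborel. f t * B i t))
        \<longlonglongrightarrow> - (LINT t:{0..T}|lborel. g t * psi0 t)"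
    unfolding eq by (rule tendsto_minus[OF l3])
  ultimately have "(LINT t:{0..T}|lborel. f t * 0) + (LINT t:{0..T}|lborel. f t * psi1 t) = - (LINT t:{0..T}|lborel. g t * psi0 t)"
    by (rule LIMSEQ_unique)
  then show ?thesis by (simp add: psi0_def psi1_def Q_def)
qed

lemma SI_cong:
  fixes T :: real
  assumes "\<And>x. x \<in> {0..T} \<Longrightarrow> f x = g x"
  shows "(LINT x:{0..T}|lborel. f x) = (LINT x:{0..T}|lborel. (g x :: real))"
proof (rule set_lebesgue_integral_cong)
  show "{0..T} \<in> sets lborel" by (simp add: atLeastAtMost_borel)
  show "\<forall>x. x \<in> {0..T} \<longrightarrow> f x = g x" using assms by auto
qed

lemma test_deriv:
  assumes "test_fun T \<phi>"
  shows "test_fun T (deriv \<phi>)"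
proof -
  obtain a b where ab: "0 < a" "a \<le> b" "b < T" "\<And>x. x \<notin> {a..b} \<Longrightarrow> \<phi> x = 0"
    using assms unfolding test_fun_def by blast
  have sm: "\<forall>j x. (deriv^^j) (deriv \<phi>) differentiable (at x)"
  proof (intro allI)
    fix j x
    have "(deriv^^j) (deriv \<phi>) = (deriv^^Suc j) \<phi>" by (simp only: funpow_Suc_right o_def)
    then show "(deriv^^j) (deriv \<phi>) differentiable (at x)" using assms unfolding test_fun_def by metis
  qed
  have "deriv \<phi> x = 0" if x: "x \<notin> {a..b}" for x
  proof -
    have "((\<lambda>_. 0) has_real_derivative 0) (at x)" by simp
    then have "(\<phi> has_real_derivative 0) (at x)"
      by (rule has_field_derivative_transform_within_open[of _ _ _ "- {a..b}"]) (use x ab in auto)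
    then show ?thesis by (rule DERIV_imp_deriv)
  qed
  then show ?thesis unfolding test_fun_def using sm ab by blast
qed

lemma first_order:
  assumes sd: "sobolev_data T k v" and l: "l < k" and \<phi>: "test_fun T \<phi>"
  shows "(LINT t:{0..T}|lborel. v l t * deriv \<phi> t) = - (LINT t:{0..T}|lborel. v (Suc l) t * \<phi> t)"
proof -
  have W: "\<And>j \<phi>. j \<le> k \<Longrightarrow> test_fun T \<phi> \<Longrightarrow>
          (LINT t:{0..T}|lborel. v 0 t * (deriv ^^ j) \<phi> t) = (-1) ^ j * (LINT t:{0..T}|lborel. v j t * \<phi> t)"
    using sd unfolding sobolev_data_def by blast
  have e: "(deriv^^l) (deriv \<phi>) = (deriv^^Suc l) \<phi>" by (simp only: funpow_Suc_right o_def)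
  have 1: "(LINT t:{0..T}|lborel. v 0 t * (deriv ^^ Suc l) \<phi> t) = (-1) ^ l * (LINT t:{0..T}|lborel. v l t * deriv \<phi> t)"
    using W[of l "deriv \<phi>"] l test_deriv[OF \<phi>] unfolding e by simp
  have 2: "(LINT t:{0..T}|lborel. v 0 t * (deriv ^^ Suc l) \<phi> t) = (-1) ^ Suc l * (LINT t:{0..T}|lborel. v (Suc l) t * \<phi> t)"
    using W[of "Suc l" \<phi>] l \<phi> by simp
  from 1 2 have "(-1) ^ l * (LINT t:{0..T}|lborel. v l t * deriv \<phi> t) = (-1) ^ l * (- (LINT t:{0..T}|lborel. v (Suc l) t * \<phi> t))"
    by simp
  then have "(-1) ^ l * ((-1) ^ l * (LINT t:{0..T}|lborel. v l t * deriv \<phi> t)) = (-1) ^ l * ((-1) ^ l * (- (LINT t:{0..T}|lborel. v (Suc l) t * \<phi> t)))"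
    by (rule arg_cong)
  moreover have h1: "(-1::real) ^ l * (-1) ^ l = 1" by (simp add: power_mult_distrib[symmetric])
  ultimately show ?thesis by (simp only: mult.assoc[symmetric] h1 mult_1)
qed

definition Eop :: "real poly \<Rightarrow> real poly" where "Eop p = pderiv p - p"

lemma E_form:
  assumes "j \<le> i"
  shows "\<exists>q. (Eop^^j) (r ^ i * p) = r ^ (i - j) * (q :: real poly)"
  using assms
proof (induction j)
  case 0
  then show ?case by auto
next
  case (Suc j)
  then obtain q where q: "(Eop^^j) (r ^ i * p) = r ^ (i - j) * q" by auto
  obtain s where s: "i - j = Suc s" "i - Suc j = s" using Suc.prems by (metis Suc_diff_Suc Suc_le_lessD)
  have "(Eop^^Suc j) (r ^ i * p) = Eop (r ^ Suc s * q)" using q s by simp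
  also have "\<dots> = r ^ s * (r * pderiv q + smult (of_nat (Suc s)) (q * pderiv r) - r * q)"
    by (simp add: Eop_def pderiv_mult pderiv_power_Suc algebra_simps del: power_Suc) (simp add: power_Suc algebra_simps)
  finally show ?case using s by auto
qed

lemma iter_rel:
  assumes T: "T > 0" and sd: "sobolev_data T k v"
  shows "l + m \<le> k \<Longrightarrow> (LINT t:{0..T}|lborel. v l t * (exp (- t) * poly ((Eop^^m) (rho T ^ k * p)) t))
      = (-1)^m * (LINT t:{0..T}|lborel. v (l + m) t * (exp (- t) * poly (rho T ^ k * p) t))"
proof (induction m arbitrary: l)
  case 0
  then show ?case by simp
next
  case (Suc m)
  have L2: "L2_on T (v j)" if "j \<le> k" for j using sd that unfolding sobolev_data_def by blast
  obtain q where q: "(Eop^^m) (rho T ^ k * p) = rho T ^ (k - m) * q"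
    using E_form[of m k "rho T" p] Suc.prems by auto
  have "k - m = Suc (k - m - 1)" using Suc.prems by simp
  then have q': "(Eop^^m) (rho T ^ k * p) = rho T * (rho T ^ (k - m - 1) * q)"
    using q by (metis mult.assoc power_Suc)
  have "(LINT t:{0..T}|lborel. v l t * (exp (- t) * poly ((Eop^^Suc m) (rho T ^ k * p)) t))
      = (LINT t:{0..T}|lborel. v l t * (exp (- t) * poly (pderiv (rho T * (rho T ^ (k - m - 1) * q)) - rho T * (rho T ^ (k - m - 1) * q)) t))"
    by (simp add: q' Eop_def)
  also have "\<dots> = - (LINT t:{0..T}|lborel. v (Suc l) t * (exp (- t) * poly (rho T * (rho T ^ (k - m - 1) * q)) t))"
    by (rule ext1[OF T L2 L2]) (use Suc.prems first_order[OF sd] in auto)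
  also have "\<dots> = - (LINT t:{0..T}|lborel. v (Suc l) t * (exp (- t) * poly ((Eop^^m) (rho T ^ k * p)) t))"
    by (simp add: q')
  also have "\<dots> = - ((-1)^m * (LINT t:{0..T}|lborel. v (Suc l + m) t * (exp (- t) * poly (rho T ^ k * p) t)))"
    using Suc.IH[of "Suc l"] Suc.prems by simp
  finally show ?case by simp
qed

lemma pderiv_Eop: "pderiv p = Eop p + p" by (simp add: Eop_def)

lemma pderiv_sum: "pderiv (\<Sum>i\<in>A. f i) = (\<Sum>i\<in>A. pderiv (f i))"
  using higher_pderiv_sum[of 1 f A] by simp

lemma binom_E:
  "(pderiv^^k) G = (\<Sum>i\<le>k. smult (real (k choose i)) ((Eop^^i) G))"
proof (induction k)
  case 0
  then show ?case by simp
next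
  case (Suc k)
  define x where "x i = (Eop^^i) G" for i
  have xs: "Eop (x i) = x (Suc i)" for i by (simp add: x_def)
  have "(pderiv^^Suc k) G = pderiv (\<Sum>i\<le>k. smult (real (k choose i)) (x i))"
    by (simp add: Suc.IH x_def)
  also have "\<dots> = (\<Sum>i\<le>k. smult (real (k choose i)) (pderiv (x i)))"
    by (simp only: pderiv_sum pderiv_smult)
  also have "\<dots> = (\<Sum>i\<le>k. smult (real (k choose i)) (x (Suc i)) + smult (real (k choose i)) (x i))"
    by (simp only: pderiv_Eop xs smult_add_right)
  also have "\<dots> = (\<Sum>i\<le>k. smult (real (k choose i)) (x (Suc i))) + (\<Sum>i\<le>k. smult (real (k choose i)) (x i))"
    by (rule sum.distrib)
  also have "(\<Sum>i\<le>k. smult (real (k choose i)) (x i)) = (\<Sum>i\<le>Suc k. smult (real (k choose i)) (x i))"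
    by simp
  also have "\<dots> = x 0 + (\<Sum>i\<le>k. smult (real (k choose Suc i)) (x (Suc i)))"
    by (subst sum.atMost_Suc_shift) simp
  also have "(\<Sum>i\<le>k. smult (real (k choose i)) (x (Suc i))) + (x 0 + (\<Sum>i\<le>k. smult (real (k choose Suc i)) (x (Suc i))))
      = x 0 + (\<Sum>i\<le>k. smult (real (Suc k choose Suc i)) (x (Suc i)))"
    by (simp add: sum.distrib[symmetric] smult_add_left algebra_simps)
  also have "\<dots> = (\<Sum>i\<le>Suc k. smult (real (Suc k choose i)) (x i))"
    by (subst sum.atMost_Suc_shift) simp
  finally show ?case by (simp add: x_def)
qed

lemma alpha_PI:
  assumes "T > 0"
  shows "alpha T n * alpha T m * PI T (Rn T n * Rn T m) = (if n = m then 1 else 0)"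
proof -
  have "alpha T n * alpha T m * PI T (Rn T n * Rn T m) = (LINT t:{0..T}|lborel. (alpha T n * alpha T m) * poly (Rn T n * Rn T m) t)"
    unfolding PI_def by (rule set_integral_mult_right[symmetric])
  also have "\<dots> = (LINT t:{0..T}|lborel. legendreQ T n t * legendreQ T m t)"
    by (simp add: legendreQ_poly[OF assms] algebra_simps)
  also have "\<dots> = (if n = m then 1 else 0)" by (rule Q_orthonormal[OF assms])
  finally show ?thesis .
qed

lemma Lam_pos: "k \<le> n \<Longrightarrow> Lam n k > 0"
  unfolding Lam_def by (rule prod_pos) auto

lemma Lam_bound:
  assumes "2 * k \<le> n"
  shows "real n ^ (2 * k) \<le> 2 ^ k * Lam n k"
proof -
  have f: "real n ^ 2 \<le> 2 * ((real n + real j + 1) * (real n - real j))" if "j < k" for j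
  proof -
    have a: "real n \<le> real n + real j + 1" by simp
    have b: "real n / 2 \<le> real n - real j" using assms that by linarith
    have "real n * (real n / 2) \<le> (real n + real j + 1) * (real n - real j)"
      by (rule mult_mono[OF a b]) auto
    then show ?thesis by (simp add: power2_eq_square)
  qed
  have "(\<Prod>j<k. real n ^ 2) \<le> (\<Prod>j<k. 2 * ((real n + real j + 1) * (real n - real j)))"
    by (rule prod_mono) (use f in auto)
  also have "\<dots> = 2 ^ k * Lam n k" by (simp add: Lam_def prod.distrib)
  finally show ?thesis by (simp add: power_mult)
qed

lemma CS_sum: "finite I \<Longrightarrow> (\<Sum>i\<in>I. a i)\<^sup>2 \<le> real (card I) * (\<Sum>i\<in>I. (a i :: real)\<^sup>2)"
  using Cauchy_Schwarz_ineq_sum[of a "\<lambda>_. 1" I] by (simp add: mult.commute)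

lemma rho_nonneg: "0 \<le> t \<Longrightarrow> t \<le> T \<Longrightarrow> 0 \<le> poly (rho T) t"
  by (simp add: poly_rho)

lemma rho_le: "0 \<le> t \<Longrightarrow> t \<le> T \<Longrightarrow> poly (rho T) t \<le> T\<^sup>2"
proof -
  assume "0 \<le> t" "t \<le> T"
  then have "t * (T - t) \<le> T * T" by (intro mult_mono) auto
  then show ?thesis by (simp add: poly_rho power2_eq_square)
qed

definition gf :: "real \<Rightarrow> nat \<Rightarrow> (nat \<Rightarrow> real \<Rightarrow> real) \<Rightarrow> nat \<Rightarrow> real \<Rightarrow> real" where
  "gf T k v i t = v i t * (exp (- t) * sqrt (poly (rho T) t) ^ k)"

definition ff :: "real \<Rightarrow> nat \<Rightarrow> nat \<Rightarrow> real \<Rightarrow> real" where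
  "ff T k n t = alpha T n / sqrt (Lam n k) * (sqrt (poly (rho T) t) ^ k * poly ((pderiv^^k) (Rn T n)) t)"

lemma ff_cont: "continuous_on {0..T} (ff T k n)"
  unfolding ff_def by (intro continuous_intros poly_cont)

lemma sqrt_pow_sq: "0 \<le> x \<Longrightarrow> sqrt x ^ k * sqrt x ^ k = x ^ k"
  by (simp add: power_mult_distrib[symmetric])

lemma ff_orth:
  assumes T: "T > 0" and n: "k \<le> n" and m: "k \<le> m"
  shows "(LINT t:{0..T}|lborel. ff T k n t * ff T k m t) = (if n = m then 1 else 0)"
proof -
  have "(LINT t:{0..T}|lborel. ff T k n t * ff T k m t)
      = (LINT t:{0..T}|lborel. (alpha T n / sqrt (Lam n k) * (alpha T m / sqrt (Lam m k))) *
           poly (rho T ^ k * (pderiv^^k) (Rn T n) * (pderiv^^k) (Rn T m)) t)"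
  proof (rule SI_cong)
    fix t :: real assume t: "t \<in> {0..T}"
    have "sqrt (poly (rho T) t) ^ k * sqrt (poly (rho T) t) ^ k = poly (rho T) t ^ k"
      by (rule sqrt_pow_sq) (use t rho_nonneg in auto)
    then show "ff T k n t * ff T k m t = (alpha T n / sqrt (Lam n k) * (alpha T m / sqrt (Lam m k))) *
           poly (rho T ^ k * (pderiv^^k) (Rn T n) * (pderiv^^k) (Rn T m)) t"
      unfolding ff_def poly_mult poly_power by (simp add: algebra_simps)
  qed
  also have "\<dots> = (alpha T n / sqrt (Lam n k) * (alpha T m / sqrt (Lam m k))) * (Lam n k * PI T (Rn T n * Rn T m))"
    unfolding PI_def[symmetric] set_integral_mult_right using weighted_orth[of T k n m] T by simp
  also have "\<dots> = (if n = m then 1 else 0)"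
  proof (cases "n = m")
    case True
    have L: "Lam n k > 0" using Lam_pos[OF n] .
    have sq: "sqrt (Lam n k) * sqrt (Lam n k) = Lam n k" using L by simp
    have nz: "sqrt (Lam n k) \<noteq> 0" using L by simp
    have g: "\<And>a c L P::real. c \<noteq> 0 \<Longrightarrow> c * c = L \<Longrightarrow> (a / c * (a / c)) * (L * P) = a * a * P"
    proof -
      fix a c L P :: real assume h: "c \<noteq> 0" "c * c = L"
      then show "(a / c * (a / c)) * (L * P) = a * a * P" by (auto simp: field_simps)
    qed
    have "(alpha T n / sqrt (Lam n k) * (alpha T n / sqrt (Lam n k))) * (Lam n k * PI T (Rn T n * Rn T n))
        = alpha T n * alpha T n * PI T (Rn T n * Rn T n)"
      by (rule g[OF nz sq])
    also have "\<dots> = 1" using alpha_PI[OF T, of n n] by simp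
    finally have X: "(alpha T n / sqrt (Lam n k) * (alpha T n / sqrt (Lam n k))) * (Lam n k * PI T (Rn T n * Rn T n)) = 1" .
    show ?thesis unfolding True[symmetric] using X by (simp only: simp_thms if_True)
  next
    case False
    then show ?thesis using alpha_PI[OF T, of n m] Rn_orth[of T m n] T by simp
  qed
  finally show ?thesis .
qed

lemma rep_bound:
  fixes C b :: "nat \<Rightarrow> real" and L N x :: real
  assumes L: "L > 0" and x: "x = ((-1)^k / sqrt L) * (\<Sum>i\<le>k. C i * (-1)^i * b i)"
    and C: "\<And>i. i \<le> k \<Longrightarrow> \<bar>C i\<bar> \<le> 2^k" and N: "0 \<le> N" "N \<le> 2^k * L"
  shows "N * x\<^sup>2 \<le> 2^k * (real (k+1) * 4^k) * (\<Sum>i\<le>k. (b i)\<^sup>2)"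
proof -
  define S where "S = (\<Sum>i\<le>k. C i * (-1)^i * b i)"
  have x2: "x\<^sup>2 = S\<^sup>2 / L"
  proof -
    have "x\<^sup>2 = ((-1)^k)\<^sup>2 / (sqrt L)\<^sup>2 * S\<^sup>2" unfolding x S_def by (simp add: power_mult_distrib power_divide)
    also have "((-1::real)^k)\<^sup>2 = 1" by (simp add: power_even_eq[symmetric] power_mult[symmetric])
    also have "(sqrt L)\<^sup>2 = L" using L by simp
    finally show ?thesis by simp
  qed
  have "S\<^sup>2 \<le> real (card {..k}) * (\<Sum>i\<le>k. (C i * (-1)^i * b i)\<^sup>2)"
    unfolding S_def by (rule CS_sum) simp
  also have "\<dots> \<le> real (k+1) * (\<Sum>i\<le>k. 4^k * (b i)\<^sup>2)"
  proof -
    have "(C i * (-1)^i * b i)\<^sup>2 \<le> 4^k * (b i)\<^sup>2" if "i \<le> k" for i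
    proof -
      have "(C i)\<^sup>2 \<le> (2^k)\<^sup>2" using C[OF that] by (simp add: abs_le_square_iff[symmetric])
      also have "((2::real)^k)^2 = 4^k" by (simp add: power2_eq_square power_mult_distrib[symmetric])
      finally have "(C i)\<^sup>2 \<le> 4^k" .
      moreover have "(C i * (-1)^i * b i)\<^sup>2 = (C i)\<^sup>2 * (b i)\<^sup>2"
        by (simp add: power_mult_distrib power_even_eq[symmetric] power_mult[symmetric])
      ultimately show ?thesis by (simp add: mult_right_mono)
    qed
    then show ?thesis by (intro mult_mono sum_mono sum_nonneg) auto
  qed
  also have "\<dots> = real (k+1) * 4^k * (\<Sum>i\<le>k. (b i)\<^sup>2)" by (simp add: sum_distrib_left mult.assoc)
  finally have S2: "S\<^sup>2 \<le> real (k+1) * 4^k * (\<Sum>i\<le>k. (b i)\<^sup>2)" .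
  have "N * x\<^sup>2 = (N / L) * S\<^sup>2" using x2 by simp
  also have "\<dots> \<le> 2^k * (real (k+1) * 4^k * (\<Sum>i\<le>k. (b i)\<^sup>2))"
  proof (rule mult_mono)
    show "N / L \<le> 2^k" using N L by (simp add: divide_le_eq)
  qed (use S2 in auto)
  finally show ?thesis by (simp add: mult.assoc)
qed

lemma cn_eq:
  assumes T: "T > 0"
  shows "weighted_inner T u (legendrePsi T n) = (LINT t:{0..T}|lborel. u t * (exp (- t) * (alpha T n * poly (Rn T n) t)))"
  unfolding weighted_inner_def legendrePsi_def
proof (rule SI_cong)
  fix t :: real
  have "exp (-2 * t) * exp t = exp (- t)" by (simp add: exp_add[symmetric])
  then show "exp (-2 * t) * u t * (exp t * legendreQ T n t) = u t * (exp (- t) * (alpha T n * poly (Rn T n) t))"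
    using legendreQ_poly[OF T] by (simp add: algebra_simps)
qed

lemma big_n:
  assumes T: "T > 0" and sd: "sobolev_data T k v" and n: "2 * k + 1 \<le> n"
  shows "real n ^ (2*k) * (weighted_inner T (v 0) (legendrePsi T n))\<^sup>2
     \<le> 2^k * (real (k+1) * 4^k) * (\<Sum>i\<le>k. (LINT t:{0..T}|lborel. gf T k v i t * ff T k n t)\<^sup>2)"
proof -
  have kn: "k \<le> n" using n by simp
  define L where "L = Lam n k"
  have L: "L > 0" using Lam_pos[OF kn] by (simp add: L_def)
  define a where "a = alpha T n"
  define G where "G = rho T ^ k * (pderiv^^k) (Rn T n)"
  have L2: "L2_on T (v i)" if "i \<le> k" for i using sd that unfolding sobolev_data_def by blast
  have gg: "smult ((-1)^k * L) (Rn T n) = (\<Sum>i\<le>k. smult (real (k choose i)) ((Eop^^i) G))"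
    using gegen[of k T n] binom_E[of k G] by (simp add: G_def L_def)
  have R: "poly (Rn T n) t = ((-1)^k / L) * (\<Sum>i\<le>k. real (k choose i) * poly ((Eop^^i) G) t)" for t
  proof -
    have "((-1)^k * L) * poly (Rn T n) t = (\<Sum>i\<le>k. real (k choose i) * poly ((Eop^^i) G) t)"
      using arg_cong[OF gg, of "\<lambda>p. poly p t"] by (simp add: poly_sum)
    moreover have ee: "((-1::real)^k) * (-1)^k = 1" by (simp add: power_mult_distrib[symmetric])
    moreover have g: "\<And>e L P S :: real. e * e = 1 \<Longrightarrow> L \<noteq> 0 \<Longrightarrow> (e * L) * P = S \<Longrightarrow> P = (e / L) * S"
    proof -
      fix e L P S :: real assume h: "e * e = 1" "L \<noteq> 0" "(e * L) * P = S"
      have "(e / L) * S = (e / L) * ((e * L) * P)" using h(3) by simp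
      also have "\<dots> = (e * e) * (L / L) * P" by (simp add: algebra_simps)
      also have "\<dots> = P" using h(1,2) by simp
      finally show "P = (e / L) * S" by simp
    qed
    ultimately show ?thesis using L by (intro g) auto
  qed
  have cont_i: "continuous_on {0..T} (\<lambda>t. exp (-t) * poly ((Eop^^i) G) t)" for i
    by (intro continuous_intros poly_cont)
  have int_i: "set_integrable lborel {0..T} (\<lambda>t. v 0 t * (exp (-t) * poly ((Eop^^i) G) t))" for i
    by (rule L2_prod_int[OF L2 L2_cont[OF cont_i]]) simp
  define Y where "Y i = (LINT t:{0..T}|lborel. v i t * (exp (- t) * poly G t))" for i
  have X: "(LINT t:{0..T}|lborel. v 0 t * (exp (- t) * poly ((Eop^^i) G) t)) = (-1)^i * Y i" if "i \<le> k" for i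
    using iter_rel[OF T sd, of 0 i "(pderiv^^k) (Rn T n)"] that by (simp add: G_def Y_def)
  define b where "b i = (LINT t:{0..T}|lborel. gf T k v i t * ff T k n t)" for i
  have bY: "b i = a / sqrt L * Y i" for i
  proof -
    have "b i = (LINT t:{0..T}|lborel. (a / sqrt L) * (v i t * (exp (- t) * poly G t)))"
      unfolding b_def
    proof (rule SI_cong)
      fix t :: real assume t: "t \<in> {0..T}"
      have sq: "sqrt (poly (rho T) t) ^ k * sqrt (poly (rho T) t) ^ k = poly (rho T) t ^ k"
        by (rule sqrt_pow_sq) (use t rho_nonneg in auto)
      have "gf T k v i t * ff T k n t = (a / sqrt L) * (v i t * (exp (- t) *
          ((sqrt (poly (rho T) t) ^ k * sqrt (poly (rho T) t) ^ k) * poly ((pderiv^^k) (Rn T n)) t)))"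
        by (simp add: gf_def ff_def a_def L_def mult_ac)
      also have "\<dots> = (a / sqrt L) * (v i t * (exp (- t) * poly G t))"
        unfolding sq by (simp add: G_def poly_mult poly_power)
      finally show "gf T k v i t * ff T k n t = (a / sqrt L) * (v i t * (exp (- t) * poly G t))" .
    qed
    then show ?thesis unfolding Y_def by simp
  qed
  have c: "weighted_inner T (v 0) (legendrePsi T n) = ((-1)^k / sqrt L) * (\<Sum>i\<le>k. real (k choose i) * (-1)^i * b i)"
  proof -
    have "weighted_inner T (v 0) (legendrePsi T n) = (LINT t:{0..T}|lborel. \<Sum>i\<le>k. (a * ((-1)^k / L) * real (k choose i)) * (v 0 t * (exp (- t) * poly ((Eop^^i) G) t)))"
      unfolding cn_eq[OF T]
    proof (rule SI_cong)
      fix t :: real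
      show "v 0 t * (exp (- t) * (alpha T n * poly (Rn T n) t)) = (\<Sum>i\<le>k. (a * ((-1)^k / L) * real (k choose i)) * (v 0 t * (exp (- t) * poly ((Eop^^i) G) t)))"
        unfolding R a_def by (simp add: sum_distrib_left algebra_simps)
    qed
    also have "\<dots> = (\<Sum>i\<le>k. (LINT t:{0..T}|lborel. (a * ((-1)^k / L) * real (k choose i)) * (v 0 t * (exp (- t) * poly ((Eop^^i) G) t))))"
      by (rule SI_sum) (simp, rule set_integrable_mult_right[OF int_i])
    also have "\<dots> = (\<Sum>i\<le>k. (a * ((-1)^k / L) * real (k choose i)) * ((-1)^i * Y i))"
      by (intro sum.cong refl) (simp add: X)
    also have "\<dots> = ((-1)^k / sqrt L) * (\<Sum>i\<le>k. real (k choose i) * (-1)^i * b i)"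
    proof -
      have g: "\<And>c e s C Y a L :: real. c \<noteq> 0 \<Longrightarrow> c * c = L \<Longrightarrow> a * (s / L) * C * (e * Y) = s / c * (C * e * (a / c * Y))"
        by (auto simp: field_simps)
      have nz: "sqrt L \<noteq> 0" "sqrt L * sqrt L = L" using L by simp_all
      show ?thesis unfolding sum_distrib_left bY
        by (intro sum.cong refl g[OF nz])
    qed
    finally show ?thesis .
  qed
  have Cb: "\<bar>real (k choose i)\<bar> \<le> 2^k" for i
  proof -
    have "real (k choose i) \<le> real (2^k)" by (rule of_nat_mono[OF binomial_le_pow2])
    then show ?thesis by simp
  qed
  have N: "real n ^ (2*k) \<le> 2^k * L" using Lam_bound[of k n] n by (simp add: L_def)
  show ?thesis
    unfolding b_def[symmetric]
    by (rule rep_bound[OF L c Cb _ N]) simp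
qed

lemma gf_L2:
  assumes "L2_on T (v i)"
  shows "L2_on T (gf T k v i)"
proof -
  have "L2_on T (\<lambda>t. v i t * (exp (- t) * sqrt (poly (rho T) t) ^ k))"
    by (rule L2_mult_cont[OF assms]) (intro continuous_intros poly_cont)
  then show ?thesis unfolding gf_def[abs_def] .
qed

lemma gf_sq_bound:
  assumes T: "T > 0" and L2: "L2_on T (v i)"
  shows "(LINT t:{0..T}|lborel. (gf T k v i t)\<^sup>2) \<le> (T\<^sup>2)^k * (LINT t:{0..T}|lborel. (v i t)\<^sup>2)"
proof -
  have i1: "set_integrable lborel {0..T} (\<lambda>t. (gf T k v i t)\<^sup>2)" using gf_L2[of T v i k, OF L2] unfolding L2_on_def by blast
  have i2: "set_integrable lborel {0..T} (\<lambda>t. (T\<^sup>2)^k * (v i t)\<^sup>2)"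
    using L2 unfolding L2_on_def by simp
  have "(LINT t:{0..T}|lborel. (gf T k v i t)\<^sup>2) \<le> (LINT t:{0..T}|lborel. (T\<^sup>2)^k * (v i t)\<^sup>2)"
  proof (rule set_integral_mono[OF i1 i2])
    fix t assume t: "t \<in> {0..T}"
    have r0: "0 \<le> poly (rho T) t" using t rho_nonneg by auto
    have rT: "poly (rho T) t \<le> T\<^sup>2" using t rho_le by auto
    have e1: "(exp (- t))\<^sup>2 \<le> 1" using t by (simp add: power2_eq_square exp_add[symmetric])
    have s: "(sqrt (poly (rho T) t) ^ k)\<^sup>2 = poly (rho T) t ^ k"
      using r0 by (simp add: power_mult[symmetric] mult.commute[of k] power_mult)
    have s2: "poly (rho T) t ^ k \<le> (T\<^sup>2)^k" by (rule power_mono[OF rT r0])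
    have "(gf T k v i t)\<^sup>2 = (v i t)\<^sup>2 * ((exp (- t))\<^sup>2 * poly (rho T) t ^ k)"
      unfolding gf_def by (simp add: power_mult_distrib s)
    also have "\<dots> \<le> (v i t)\<^sup>2 * (1 * (T\<^sup>2)^k)"
      by (intro mult_left_mono mult_mono e1 s2) (use r0 in auto)
    finally show "(gf T k v i t)\<^sup>2 \<le> (T\<^sup>2)^k * (v i t)\<^sup>2" by (simp add: mult.commute)
  qed
  also have "\<dots> = (T\<^sup>2)^k * (LINT t:{0..T}|lborel. (v i t)\<^sup>2)" by simp
  finally show ?thesis .
qed

lemma legQ_cont: "T > 0 \<Longrightarrow> continuous_on {0..T} (legendreQ T n)"
proof -
  assume T: "T > 0"
  have "legendreQ T n = (\<lambda>t. alpha T n * poly (Rn T n) t)" using legendreQ_poly[OF T] by auto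
  then show ?thesis by (simp add: continuous_intros poly_cont)
qed

theorem lemma2p1:
  fixes T :: real and k :: nat
  assumes "T > 0"
  shows "\<exists>C>0. \<forall>v. sobolev_data T k v \<longrightarrow>
           summable (\<lambda>n. real n ^ (2 * k) * \<bar>weighted_inner T (v 0) (legendrePsi T n)\<bar>\<^sup>2)
           \<and> (\<Sum>n. real n ^ (2 * k) * \<bar>weighted_inner T (v 0) (legendrePsi T n)\<bar>\<^sup>2)
               \<le> C * Hk_norm_sq T k v"
proof -
  note T = assms
  define N0 where "N0 = 2 * k + 1"
  define K1 :: real where "K1 = 2^k * (real (k+1) * 4^k)"
  define C where "C = real N0 ^ (2*k) + K1 * (T\<^sup>2)^k"
  have K1: "K1 \<ge> 0" unfolding K1_def by simp
  have C: "C > 0" unfolding C_def N0_def using K1 T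
    by (intro add_pos_nonneg) auto
  have main: "summable (\<lambda>n. real n ^ (2 * k) * \<bar>weighted_inner T (v 0) (legendrePsi T n)\<bar>\<^sup>2)
           \<and> (\<Sum>n. real n ^ (2 * k) * \<bar>weighted_inner T (v 0) (legendrePsi T n)\<bar>\<^sup>2) \<le> C * Hk_norm_sq T k v"
    if sd: "sobolev_data T k v" for v
  proof -
    define c where "c n = weighted_inner T (v 0) (legendrePsi T n)" for n
    define a where "a n = real n ^ (2 * k) * \<bar>c n\<bar>\<^sup>2" for n
    have a0: "0 \<le> a n" for n unfolding a_def by simp
    have L2: "L2_on T (v i)" if "i \<le> k" for i using sd that unfolding sobolev_data_def by blast
    define Hk where "Hk = Hk_norm_sq T k v"
    have Hk_eq: "Hk = (\<Sum>j\<le>k. (LINT t:{0..T}|lborel. (v j t)\<^sup>2))" unfolding Hk_def Hk_norm_sq_def ..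
    have Hk0: "0 \<le> Hk" unfolding Hk_eq by (intro sum_nonneg SI_nonneg) simp
    have v0Hk: "(LINT t:{0..T}|lborel. (v 0 t)\<^sup>2) \<le> Hk"
      unfolding Hk_eq by (rule member_le_sum[where f = "\<lambda>j. (LINT t:{0..T}|lborel. (v j t)\<^sup>2)"]) (auto intro: SI_nonneg)
    have small: "(\<Sum>n<N0. a n) \<le> real N0 ^ (2*k) * Hk"
    proof -
      define g where "g t = v 0 t * exp (- t)" for t
      have gL2: "L2_on T g" unfolding g_def[abs_def] by (rule L2_mult_cont[OF L2]) (simp, intro continuous_intros)
      have cg: "c n = (LINT t:{0..T}|lborel. g t * legendreQ T n t)" for n
        unfolding c_def weighted_inner_def legendrePsi_def g_def
      proof (rule SI_cong)
        fix t :: real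
        have "exp (-2 * t) * exp t = exp (- t)" by (simp add: exp_add[symmetric])
        then show "exp (-2 * t) * v 0 t * (exp t * legendreQ T n t) = v 0 t * exp (- t) * legendreQ T n t"
          by (simp add: algebra_simps)
      qed
      have "(\<Sum>n<N0. a n) \<le> (\<Sum>n<N0. real N0 ^ (2*k) * (c n)\<^sup>2)"
      proof (rule sum_mono)
        fix n assume "n \<in> {..<N0}"
        then have "real n ^ (2*k) \<le> real N0 ^ (2*k)" by (intro power_mono) auto
        then show "a n \<le> real N0 ^ (2*k) * (c n)\<^sup>2" unfolding a_def by (simp add: mult_right_mono)
      qed
      also have "\<dots> = real N0 ^ (2*k) * (\<Sum>n<N0. (c n)\<^sup>2)" by (simp add: sum_distrib_left)
      finally have s1: "(\<Sum>n<N0. a n) \<le> real N0 ^ (2*k) * (\<Sum>n<N0. (c n)\<^sup>2)" .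
      have "(\<Sum>n<N0. (c n)\<^sup>2) \<le> (LINT t:{0..T}|lborel. (g t)\<^sup>2)"
        unfolding cg by (rule bessel[OF gL2]) (auto simp: legQ_cont[OF T] Q_orthonormal[OF T])
      also have "(LINT t:{0..T}|lborel. (g t)\<^sup>2) \<le> (LINT t:{0..T}|lborel. (v 0 t)\<^sup>2)"
      proof (rule set_integral_mono)
        show "set_integrable lborel {0..T} (\<lambda>t. (g t)\<^sup>2)" using gL2 unfolding L2_on_def by blast
        show "set_integrable lborel {0..T} (\<lambda>t. (v 0 t)\<^sup>2)" using L2[of 0] unfolding L2_on_def by blast
        fix t :: real assume t: "t \<in> {0..T}"
        have "(exp (- t))\<^sup>2 \<le> 1" using t by (simp add: power2_eq_square exp_add[symmetric])
        then have "(v 0 t)\<^sup>2 * (exp (- t))\<^sup>2 \<le> (v 0 t)\<^sup>2 * 1" by (intro mult_left_mono) auto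
        then show "(g t)\<^sup>2 \<le> (v 0 t)\<^sup>2" by (simp add: g_def power_mult_distrib)
      qed
      also note v0Hk
      finally have "(\<Sum>n<N0. (c n)\<^sup>2) \<le> Hk" .
      then have "real N0 ^ (2*k) * (\<Sum>n<N0. (c n)\<^sup>2) \<le> real N0 ^ (2*k) * Hk"
        by (rule mult_left_mono) simp
      then show ?thesis using s1 by linarith
    qed
    have large: "(\<Sum>n\<in>{N0..<N}. a n) \<le> K1 * (T\<^sup>2)^k * Hk" for N
    proof -
      define b where "b i n = (LINT t:{0..T}|lborel. gf T k v i t * ff T k n t)" for i n
      have "(\<Sum>n\<in>{N0..<N}. a n) \<le> (\<Sum>n\<in>{N0..<N}. K1 * (\<Sum>i\<le>k. (b i n)\<^sup>2))"
      proof (rule sum_mono)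
        fix n assume "n \<in> {N0..<N}"
        then have "2 * k + 1 \<le> n" by (simp add: N0_def)
        from big_n[OF T sd this] show "a n \<le> K1 * (\<Sum>i\<le>k. (b i n)\<^sup>2)"
          unfolding a_def c_def b_def K1_def by simp
      qed
      also have "\<dots> = K1 * (\<Sum>i\<le>k. \<Sum>n\<in>{N0..<N}. (b i n)\<^sup>2)"
        by (simp add: sum_distrib_left[symmetric] sum.swap[of _ "{N0..<N}"])
      also have "\<dots> \<le> K1 * (\<Sum>i\<le>k. (T\<^sup>2)^k * (LINT t:{0..T}|lborel. (v i t)\<^sup>2))"
      proof (intro mult_left_mono sum_mono K1)
        fix i assume i: "i \<in> {..k}"
        have L2i: "L2_on T (v i)" using i L2 by auto
        have "(\<Sum>n\<in>{N0..<N}. (b i n)\<^sup>2) \<le> (LINT t:{0..T}|lborel. (gf T k v i t)\<^sup>2)"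
          unfolding b_def
          by (rule bessel[OF gf_L2[of T v i k, OF L2i]]) (use i in \<open>auto simp: ff_cont ff_orth[OF T] N0_def\<close>)
        also have "\<dots> \<le> (T\<^sup>2)^k * (LINT t:{0..T}|lborel. (v i t)\<^sup>2)"
          by (rule gf_sq_bound[of T v i k, OF T L2i])
        finally show "(\<Sum>n\<in>{N0..<N}. (b i n)\<^sup>2) \<le> (T\<^sup>2)^k * (LINT t:{0..T}|lborel. (v i t)\<^sup>2)" .
      qed
      also have "\<dots> = K1 * (T\<^sup>2)^k * Hk" unfolding Hk_eq by (simp add: sum_distrib_left mult.assoc)
      finally show ?thesis .
    qed
    have bound: "(\<Sum>n<N. a n) \<le> C * Hk" for N
    proof -
      have "(\<Sum>n<N. a n) \<le> (\<Sum>n\<in>{..<N0} \<union> {N0..<N}. a n)"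
        by (rule sum_mono2) (auto simp: a0)
      also have "\<dots> = (\<Sum>n<N0. a n) + (\<Sum>n\<in>{N0..<N}. a n)"
        by (rule sum.union_disjoint) auto
      also have "\<dots> \<le> real N0 ^ (2*k) * Hk + K1 * (T\<^sup>2)^k * Hk"
        by (rule add_mono[OF small large])
      also have "\<dots> = C * Hk" by (simp add: C_def algebra_simps)
      finally show ?thesis .
    qed
    have sm: "summable a" by (rule summableI_nonneg_bounded[OF a0 bound])
    have "suminf a \<le> C * Hk" by (rule suminf_le_const[OF sm bound])
    then show ?thesis using sm unfolding a_def c_def Hk_def by simp
  qed
  show ?thesis using C main by blast
qed

end
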